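(* For each $p$, let $a_{p,1}\ge a_{p,2}\ge\dots\ge a_{p,p}\ge0$ and $b_{p,1}\ge\dots\ge b_{p,p}\ge0$ be real numbers with $\sum_{j=1}^pa_{p,j}^2=\sum_{j=1}^pb_{p,j}^2=1$, and assume $\max_{j\le p}|a_{p,j}-b_{p,j}|\to0$ as $p\to\infty$. Let $\eta_j$ be i.i.d. $\chi^2_1$ random variables, $\eta'_j=\eta_j-1$, $V_a=\sum_{j=1}^pa_{p,j}\eta'_j$ and $V_b=\sum_{j=1}^pb_{p,j}\eta'_j$. Then $$\sup_{x\in\mathbb{R}}|\mathbb{P}(V_a\le x)-\mathbb{P}(V_b\le x)|\to0\quad\text{as }p\to\infty.$$ *)

theory Defs
  imports "HOL-Probability.Probability"
begin

definition chi2_1_density :: "real \<Rightarrow> ennreal" where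
  "chi2_1_density x = (if x > 0 then ennreal (exp (- x / 2) / sqrt (2 * pi * x)) else 0)"

end

theory Submission
  imports Defs
begin


definition chi2d :: "real \<Rightarrow> real" where
  "chi2d x = (if x > 0 then exp (- x / 2) / sqrt (2 * pi * x) else 0)"

lemma chi2d_nonneg: "chi2d x \<ge> 0"
  by (simp add: chi2d_def)

lemma chi2_density_eq: "chi2_1_density = (\<lambda>x. ennreal (chi2d x))"
  by (auto simp: chi2_1_density_def chi2d_def fun_eq_iff)

lemma chi2d_measurable[measurable]: "chi2d \<in> borel_measurable borel"
  unfolding chi2d_def by measurable

lemma gamma_nn:
  assumes s: "s > 0"
  shows "(\<integral>\<^sup>+t. ennreal (if t \<ge> 0 then t powr (s - 1) / exp t else 0) \<partial>lborel) = ennreal (Gamma s)"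
proof -
  have "(\<integral>\<^sup>+t. ennreal (t powr (s - 1) / exp t) * indicator {0..} t \<partial>lborel) = ennreal (Gamma s)"
    by (rule nn_integral_has_integral_lebesgue'[OF _ Gamma_integral_real[OF s]]) auto
  then show ?thesis
    by (subst (asm) nn_integral_cong[where v="\<lambda>t. ennreal (if t \<ge> 0 then t powr (s - 1) / exp t else 0)"])
       (auto split: split_indicator)
qed

lemma chi2_moment:
  "(\<integral>\<^sup>+x. ennreal (chi2d x * x ^ k) \<partial>lborel)
     = ennreal (2 powr (real k - 1/2) / sqrt (2 * pi) * 2 * Gamma (real k + 1/2))"
proof -
  define s where "s = real k + 1/2"
  define G where "G t = (if t \<ge> 0 then t powr (s - 1) / exp t else 0)" for t
  define K where "K = 2 powr (real k - 1/2) / sqrt (2 * pi)"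
  have Gm[measurable]: "G \<in> borel_measurable borel" unfolding G_def by measurable
  have K0: "K \<ge> 0" unfolding K_def by simp
  have G0: "G t \<ge> 0" for t unfolding G_def by simp
  have eq: "chi2d x * x ^ k = K * G (x / 2)" for x
  proof (cases "x > 0")
    case True
    have hG: "G (x/2) = (x/2) powr (real k - 1/2) / exp (x/2)"
      using True by (simp add: G_def s_def)
    have h1: "(x/2) powr (real k - 1/2) = x powr (real k - 1/2) / 2 powr (real k - 1/2)"
      using True by (simp add: powr_divide)
    have h2: "x powr (real k - 1/2) = x ^ k / sqrt x"
      using True by (simp add: powr_diff powr_realpow powr_half_sqrt)
    have h3: "exp (- x / 2) = 1 / exp (x/2)" by (simp add: exp_minus field_simps)
    have h4: "2 powr (real k - 1/2) > 0" by simp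
    show ?thesis unfolding hG h1 h2 using True h4
      by (simp add: chi2d_def K_def real_sqrt_mult h3 field_simps flip: exp_add)
  next
    case False
    then show ?thesis by (auto simp: chi2d_def G_def)
  qed
  have "(\<integral>\<^sup>+x. ennreal (chi2d x * x ^ k) \<partial>lborel) = (\<integral>\<^sup>+x. ennreal K * ennreal (G (x/2)) \<partial>lborel)"
    by (intro nn_integral_cong) (simp add: eq ennreal_mult K0 G0)
  also have "\<dots> = ennreal K * (\<integral>\<^sup>+x. ennreal (G (x/2)) \<partial>lborel)"
    by (rule nn_integral_cmult) measurable
  also have "(\<integral>\<^sup>+x. ennreal (G (x/2)) \<partial>lborel) = ennreal \<bar>2::real\<bar> * (\<integral>\<^sup>+x. ennreal (G ((0 + 2 * x)/2)) \<partial>lborel)"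
    by (rule nn_integral_real_affine) auto
  also have "(\<integral>\<^sup>+x. ennreal (G ((0 + 2 * x)/2)) \<partial>lborel) = ennreal (Gamma s)"
    using gamma_nn[of s] by (simp add: G_def s_def)
  finally have "(\<integral>\<^sup>+x. ennreal (chi2d x * x ^ k) \<partial>lborel) = ennreal K * (ennreal 2 * ennreal (Gamma s))"
    by simp
  also have "\<dots> = ennreal (K * 2 * Gamma s)"
    using K0 Gamma_real_pos[of s] by (simp add: s_def ennreal_mult mult.assoc)
  finally show ?thesis by (simp add: K_def s_def)
qed

lemma chi2_moment1: "(\<integral>\<^sup>+x. ennreal (chi2d x * x) \<partial>lborel) = 1"
proof -
  have g: "Gamma (real 1 + 1/2) = sqrt pi / 2"
  proof -
    have "(1/2::real) \<notin> \<int>\<^sub>\<le>\<^sub>0" using nonpos_Ints_nonpos by fastforce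
    then show ?thesis using Gamma_plus1[of "1/2::real"] Gamma_one_half_real by simp
  qed
  have p: "2 powr (real 1 - 1/2) = sqrt 2" by (simp add: powr_half_sqrt)
  have A: "(2::real) powr (real 1 - 1/2) / sqrt (2 * pi) * 2 * Gamma (real 1 + 1/2) = 1"
    unfolding g p by (simp add: real_sqrt_mult)
  have B: "(\<integral>\<^sup>+x. ennreal (chi2d x * x ^ 1) \<partial>lborel)
     = ennreal (2 powr (real 1 - 1/2) / sqrt (2 * pi) * 2 * Gamma (real 1 + 1/2))"
    by (rule chi2_moment)
  have "(\<integral>\<^sup>+x. ennreal (chi2d x * x ^ 1) \<partial>lborel) = ennreal 1" using B unfolding A .
  then show ?thesis by simp
qed

lemma chi2_moment2: "(\<integral>\<^sup>+x. ennreal (chi2d x * x ^ 2) \<partial>lborel) = 3"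
proof -
  have n: "(3/2::real) \<notin> \<int>\<^sub>\<le>\<^sub>0" "(1/2::real) \<notin> \<int>\<^sub>\<le>\<^sub>0" using nonpos_Ints_nonpos by fastforce+
  have g: "Gamma (real 2 + 1/2) = 3 * sqrt pi / 4"
    using Gamma_plus1[of "3/2::real"] Gamma_plus1[of "1/2::real"] Gamma_one_half_real n by simp
  have p: "2 powr (real 2 - 1/2) = 2 * sqrt 2"
  proof -
    have "(2::real) powr (real 2 - 1/2) = 2 powr (1 + 1/2)" by simp
    also have "\<dots> = 2 powr 1 * 2 powr (1/2)" by (rule powr_add)
    then show ?thesis by (simp add: powr_half_sqrt)
  qed
  have A: "(2::real) powr (real 2 - 1/2) / sqrt (2 * pi) * 2 * Gamma (real 2 + 1/2) = 3"
    unfolding g p by (simp add: real_sqrt_mult)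
  have B: "(\<integral>\<^sup>+x. ennreal (chi2d x * x ^ 2) \<partial>lborel)
     = ennreal (2 powr (real 2 - 1/2) / sqrt (2 * pi) * 2 * Gamma (real 2 + 1/2))"
    by (rule chi2_moment)
  show ?thesis using B unfolding A by simp
qed

lemma chi2d_abs: "chi2d x * \<bar>x\<bar> ^ k = chi2d x * x ^ k"
  by (simp add: chi2d_def)

lemma (in prob_space) chi2_facts:
  assumes Y: "distributed M lborel Y chi2_1_density"
  shows "random_variable borel Y"
    and "integrable M (\<lambda>\<omega>. \<bar>Y \<omega>\<bar> ^ k)"
    and "integrable M (\<lambda>\<omega>. Y \<omega> ^ k)"
    and "expectation Y = 1"
    and "expectation (\<lambda>\<omega>. (Y \<omega>)\<^sup>2) = 3"
proof -
  have Y': "distributed M lborel Y (\<lambda>x. ennreal (chi2d x))"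
    using Y by (simp add: chi2_density_eq)
  show rv: "random_variable borel Y"
    using Y by (auto simp: distributed_def)
  have int: "integrable lborel (\<lambda>x. chi2d x * \<bar>x\<bar> ^ k)" for k
  proof (rule integrableI_nonneg)
    show "(\<lambda>x. chi2d x * \<bar>x\<bar> ^ k) \<in> borel_measurable lborel" by measurable
    show "AE x in lborel. 0 \<le> chi2d x * \<bar>x\<bar> ^ k" by (simp add: chi2d_nonneg)
    show "(\<integral>\<^sup>+x. ennreal (chi2d x * \<bar>x\<bar> ^ k) \<partial>lborel) < \<infinity>"
      unfolding chi2d_abs chi2_moment by simp
  qed
  show iA: "integrable M (\<lambda>\<omega>. \<bar>Y \<omega>\<bar> ^ k)" for k
    using distributed_integrable[OF Y', of "\<lambda>x. \<bar>x\<bar> ^ k"] int[of k] chi2d_nonneg by simp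
  show "integrable M (\<lambda>\<omega>. Y \<omega> ^ k)"
    by (rule Bochner_Integration.integrable_bound[OF iA[of k]]) (use rv in \<open>auto simp: power_abs\<close>)
  have "expectation Y = (\<integral>x. chi2d x * x \<partial>lborel)"
    using distributed_integral[OF Y', of "\<lambda>x. x"] chi2d_nonneg by simp
  also have "\<dots> = enn2real (\<integral>\<^sup>+x. ennreal (chi2d x * x) \<partial>lborel)"
    by (rule integral_eq_nn_integral) (auto simp: chi2d_def)
  also have "\<dots> = 1" by (simp add: chi2_moment1)
  finally show "expectation Y = 1" .
  have "expectation (\<lambda>\<omega>. (Y \<omega>)\<^sup>2) = (\<integral>x. chi2d x * x\<^sup>2 \<partial>lborel)"
    using distributed_integral[OF Y', of "\<lambda>x. x\<^sup>2"] chi2d_nonneg by simp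
  also have "\<dots> = enn2real (\<integral>\<^sup>+x. ennreal (chi2d x * x\<^sup>2) \<partial>lborel)"
    by (rule integral_eq_nn_integral) (auto simp: chi2d_def)
  also have "\<dots> = 3" by (simp add: chi2_moment2)
  finally show "expectation (\<lambda>\<omega>. (Y \<omega>)\<^sup>2) = 3" .
qed



lemma exp_neg_bound:
  fixes x :: real assumes "0 \<le> x"
  shows "\<bar>exp (- x) - (1 - x)\<bar> \<le> x\<^sup>2 / 2"
proof -
  have lo: "1 - x \<le> exp (- x)" using exp_ge_add_one_self[of "-x"] by simp
  have up: "exp (- x) \<le> 1 - x + x\<^sup>2 / 2"
  proof -
    define f where "f y = 1 - y + y\<^sup>2 / 2 - exp (- y)" for y :: real
    have d: "(f has_real_derivative (- 1 + y + exp (- y))) (at y)" for y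
      unfolding f_def by (auto intro!: derivative_eq_intros simp: power2_eq_square)
    have "f 0 \<le> f x"
    proof (rule DERIV_nonneg_imp_nondecreasing[OF assms])
      fix y assume "0 \<le> y" "y \<le> x"
      show "\<exists>y'. (f has_real_derivative y') (at y) \<and> 0 \<le> y'"
        using d[of y] exp_ge_add_one_self[of "-y"] by (intro exI[of _ "- 1 + y + exp (- y)"]) auto
    qed
    then show ?thesis by (simp add: f_def)
  qed
  show ?thesis using lo up by simp
qed

lemma exp_neg_lip:
  fixes u v :: real assumes "0 \<le> u" "0 \<le> v"
  shows "\<bar>exp (- u) - exp (- v)\<bar> \<le> \<bar>u - v\<bar>"
proof -
  have *: "exp (- u) - exp (- v) \<le> v - u" if "u \<le> v" "0 \<le> u" for u v :: real
  proof -
    have "exp (- u) - exp (- v) = exp (- u) * (1 - exp (- (v - u)))"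
      by (simp add: algebra_simps flip: exp_add)
    also have "\<dots> \<le> 1 * (v - u)"
    proof (rule mult_mono)
      show "exp (- u) \<le> 1" using that by simp
      show "1 - exp (- (v - u)) \<le> v - u" using exp_ge_add_one_self[of "u - v"] by (simp add: algebra_simps)
      show "0 \<le> 1 - exp (- (v - u))" using that by simp
    qed auto
    finally show ?thesis by simp
  qed
  show ?thesis
  proof (cases "u \<le> v")
    case True
    with *[OF True assms(1)] show ?thesis by simp
  next
    case False
    with *[of v u] assms show ?thesis by simp
  qed
qed

definition coef :: "(nat \<Rightarrow> nat \<Rightarrow> real) \<Rightarrow> bool" where
  "coef a \<longleftrightarrow> (\<forall>p j. 1 \<le> j \<longrightarrow> j < p \<longrightarrow> a p (Suc j) \<le> a p j) \<and> (\<forall>p. p \<ge> 1 \<longrightarrow> a p p \<ge> 0)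
     \<and> (\<forall>p. p \<ge> 1 \<longrightarrow> (\<Sum>j=1..p. (a p j)\<^sup>2) = 1)"

lemma coef_mono:
  assumes "coef a" "1 \<le> i" "i \<le> j" "j \<le> p"
  shows "a p j \<le> a p i"
  using assms(3,4)
proof (induction j rule: dec_induct)
  case base then show ?case by simp
next
  case (step k)
  then have "a p (Suc k) \<le> a p k" using assms(1,2) unfolding coef_def by auto
  with step show ?case by simp
qed

lemma coef_nonneg:
  assumes "coef a" "j \<in> {1..p}" shows "0 \<le> a p j"
proof -
  have "a p p \<le> a p j" using coef_mono[OF assms(1)] assms(2) by auto
  moreover have "a p p \<ge> 0" using assms unfolding coef_def by auto
  ultimately show ?thesis by simp
qed

lemma coef_small:
  assumes "coef a" "K + 1 \<le> j" "j \<le> p"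
  shows "a p j \<le> 1 / sqrt (real K + 1)"
proof -
  have p1: "p \<ge> 1" using assms by simp
  have nn: "0 \<le> a p j" using coef_nonneg[OF assms(1)] assms by auto
  have "(\<Sum>i=1..K+1. (a p j)\<^sup>2) \<le> (\<Sum>i=1..K+1. (a p i)\<^sup>2)"
  proof (rule sum_mono)
    fix i assume i: "i \<in> {1..K+1}"
    then have "a p j \<le> a p i" using coef_mono[OF assms(1), of i j p] assms by auto
    then show "(a p j)\<^sup>2 \<le> (a p i)\<^sup>2" using nn by (simp add: power_mono)
  qed
  also have "\<dots> \<le> (\<Sum>i=1..p. (a p i)\<^sup>2)"
    by (rule sum_mono2) (use assms in auto)
  also have "\<dots> = 1" using assms p1 unfolding coef_def by auto
  finally have "(real K + 1) * (a p j)\<^sup>2 \<le> 1" by (simp add: add.commute)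
  then have "(a p j)\<^sup>2 \<le> 1 / (real K + 1)" by (simp add: field_simps)
  then have "sqrt ((a p j)\<^sup>2) \<le> sqrt (1 / (real K + 1))" by (rule real_sqrt_le_mono)
  then show ?thesis using nn by (simp add: real_sqrt_divide)
qed

lemma coef_le1:
  assumes "coef a" "j \<in> {1..p}" shows "a p j \<le> 1"
  using coef_small[OF assms(1), of 0 j p] assms by auto

lemma tail_bound:
  fixes \<psi> :: "real \<Rightarrow> complex"
  assumes psi1: "\<And>s. norm (\<psi> s) \<le> 1"
    and psiapp: "\<And>s. norm (\<psi> s - complex_of_real (1 - s\<^sup>2 * \<sigma> / 2)) \<le> C * \<bar>s\<bar> ^ 3"
    and sig: "\<sigma> \<ge> 0" and C: "C \<ge> 0"
    and c: "\<And>j. j \<in> J \<Longrightarrow> 0 \<le> c j \<and> c j \<le> m"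
  shows "norm ((\<Prod>j\<in>J. \<psi> (c j * t)) - complex_of_real (exp (- (\<sigma> * t\<^sup>2 * (\<Sum>j\<in>J. (c j)\<^sup>2)) / 2)))
     \<le> (C * \<bar>t\<bar> ^ 3 * m + \<sigma>\<^sup>2 * t ^ 4 * m\<^sup>2 / 8) * (\<Sum>j\<in>J. (c j)\<^sup>2)"
proof (cases "finite J")
  case False then show ?thesis by simp
next
  case fin: True
  have e0: "exp (- (\<sigma> * t\<^sup>2 * (\<Sum>j\<in>J. (c j)\<^sup>2)) / 2) = exp (\<Sum>j\<in>J. - (\<sigma> * t\<^sup>2 * (c j)\<^sup>2) / 2)"
    by (simp add: sum_distrib_left sum_divide_distrib sum_negf)
  have e: "complex_of_real (exp (- (\<sigma> * t\<^sup>2 * (\<Sum>j\<in>J. (c j)\<^sup>2)) / 2))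
      = (\<Prod>j\<in>J. complex_of_real (exp (- (\<sigma> * t\<^sup>2 * (c j)\<^sup>2) / 2)))"
    unfolding e0 exp_sum[OF fin] of_real_prod ..
  have "norm ((\<Prod>j\<in>J. \<psi> (c j * t)) - (\<Prod>j\<in>J. complex_of_real (exp (- (\<sigma> * t\<^sup>2 * (c j)\<^sup>2) / 2))))
      \<le> (\<Sum>j\<in>J. norm (\<psi> (c j * t) - complex_of_real (exp (- (\<sigma> * t\<^sup>2 * (c j)\<^sup>2) / 2))))"
    by (rule norm_prod_diff) (use psi1 sig in auto)
  also have "\<dots> \<le> (\<Sum>j\<in>J. (C * \<bar>t\<bar> ^ 3 * m + \<sigma>\<^sup>2 * t ^ 4 * m\<^sup>2 / 8) * (c j)\<^sup>2)"
  proof (rule sum_mono)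
    fix j assume j: "j \<in> J"
    define x where "x = \<sigma> * t\<^sup>2 * (c j)\<^sup>2 / 2"
    have x0: "0 \<le> x" unfolding x_def using sig by simp
    have c0: "0 \<le> c j" "c j \<le> m" using c[OF j] by auto
    have sp: "\<psi> (c j * t) - complex_of_real (exp (- (\<sigma> * t\<^sup>2 * (c j)\<^sup>2) / 2))
        = (\<psi> (c j * t) - complex_of_real (1 - (c j * t)\<^sup>2 * \<sigma> / 2)) + complex_of_real ((1 - x) - exp (- x))"
      by (simp add: x_def power_mult_distrib algebra_simps)
    have h2: "norm (complex_of_real ((1 - x) - exp (- x))) \<le> x\<^sup>2 / 2"
      using exp_neg_bound[OF x0] by (simp only: norm_of_real abs_minus_commute)
    have "norm (\<psi> (c j * t) - complex_of_real (exp (- (\<sigma> * t\<^sup>2 * (c j)\<^sup>2) / 2)))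
        \<le> norm (\<psi> (c j * t) - complex_of_real (1 - (c j * t)\<^sup>2 * \<sigma> / 2)) + norm (complex_of_real ((1 - x) - exp (- x)))"
      unfolding sp by (rule norm_triangle_ineq)
    also have "\<dots> \<le> C * \<bar>c j * t\<bar> ^ 3 + x\<^sup>2 / 2"
      by (rule add_mono[OF psiapp h2])
    also have "C * \<bar>c j * t\<bar> ^ 3 \<le> C * \<bar>t\<bar> ^ 3 * m * (c j)\<^sup>2"
    proof -
      have "\<bar>c j * t\<bar> ^ 3 = \<bar>t\<bar> ^ 3 * (c j * (c j)\<^sup>2)"
        using c0 by (simp add: abs_mult power_mult_distrib power3_eq_cube power2_eq_square)
      also have "\<dots> \<le> \<bar>t\<bar> ^ 3 * (m * (c j)\<^sup>2)"
        using c0 by (intro mult_left_mono mult_right_mono) auto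
      finally show ?thesis using C by (simp add: mult_left_mono mult.assoc)
    qed
    also have "x\<^sup>2 / 2 \<le> \<sigma>\<^sup>2 * t ^ 4 * m\<^sup>2 / 8 * (c j)\<^sup>2"
    proof -
      have "x\<^sup>2 / 2 = \<sigma>\<^sup>2 * t ^ 4 / 8 * ((c j)\<^sup>2 * (c j)\<^sup>2)"
        by (simp add: x_def power_mult_distrib field_simps power2_eq_square power4_eq_xxxx)
      also have "\<dots> \<le> \<sigma>\<^sup>2 * t ^ 4 / 8 * (m\<^sup>2 * (c j)\<^sup>2)"
        using c0 by (intro mult_left_mono mult_right_mono power_mono) auto
      finally show ?thesis by simp
    qed
    finally show "norm (\<psi> (c j * t) - complex_of_real (exp (- (\<sigma> * t\<^sup>2 * (c j)\<^sup>2) / 2)))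
        \<le> (C * \<bar>t\<bar> ^ 3 * m + \<sigma>\<^sup>2 * t ^ 4 * m\<^sup>2 / 8) * (c j)\<^sup>2"
      by (simp add: algebra_simps)
  qed
  also have "\<dots> = (C * \<bar>t\<bar> ^ 3 * m + \<sigma>\<^sup>2 * t ^ 4 * m\<^sup>2 / 8) * (\<Sum>j\<in>J. (c j)\<^sup>2)"
    by (simp add: sum_distrib_left)
  finally show ?thesis unfolding e .
qed

lemma tri3:
  fixes x y u v :: "'a::real_normed_vector"
  shows "norm (x - y) \<le> norm (x - u) + norm (u - v) + norm (y - v)"
proof -
  have "x - y = (x - u) + (u - v) - (y - v)" by simp
  then have "norm (x - y) \<le> norm ((x - u) + (u - v)) + norm (y - v)"
    by (metis norm_triangle_ineq4)
  also have "\<dots> \<le> norm (x - u) + norm (u - v) + norm (y - v)"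
    using norm_triangle_ineq by (intro add_right_mono) blast
  finally show ?thesis .
qed

lemma norm_mult_diff_le1:
  fixes x y x' y' :: complex
  assumes "norm y \<le> 1" "norm x' \<le> 1"
  shows "norm (x * y - x' * y') \<le> norm (x - x') + norm (y - y')"
proof -
  have "x * y - x' * y' = (x - x') * y + x' * (y - y')" by (simp add: algebra_simps)
  then have "norm (x * y - x' * y') \<le> norm (x - x') * norm y + norm x' * norm (y - y')"
    by (metis norm_mult norm_triangle_ineq)
  also have "\<dots> \<le> norm (x - x') * 1 + 1 * norm (y - y')"
    using assms by (intro add_mono mult_mono) auto
  finally show ?thesis by simp
qed

lemma char_close:
  fixes \<psi> :: "real \<Rightarrow> complex" and a b :: "nat \<Rightarrow> nat \<Rightarrow> real"
  assumes psi1: "\<And>s. norm (\<psi> s) \<le> 1"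
    and psiapp: "\<And>s. norm (\<psi> s - complex_of_real (1 - s\<^sup>2 * \<sigma> / 2)) \<le> C * \<bar>s\<bar> ^ 3"
    and psilip: "\<And>s s'. norm (\<psi> s - \<psi> s') \<le> L * \<bar>s - s'\<bar>"
    and sig: "\<sigma> \<ge> 0" and C: "C \<ge> 0" and L: "L \<ge> 0"
    and ca: "coef a" and cb: "coef b"
    and close: "(\<lambda>p. Max ((\<lambda>j. \<bar>a p j - b p j\<bar>) ` {1..p})) \<longlonglongrightarrow> 0"
  shows "(\<lambda>p. (\<Prod>j\<in>{1..p}. \<psi> (a p j * t)) - (\<Prod>j\<in>{1..p}. \<psi> (b p j * t))) \<longlonglongrightarrow> 0"
proof (rule LIMSEQ_I)
  fix \<epsilon> :: real assume \<epsilon>: "\<epsilon> > 0"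
  define D where "D = C * \<bar>t\<bar> ^ 3 + \<sigma>\<^sup>2 * t ^ 4 / 8"
  have D0: "D \<ge> 0" unfolding D_def using C by simp
  define K where "K = nat \<lceil>(4 * D / \<epsilon>)\<^sup>2\<rceil>"
  define m where "m = 1 / sqrt (real K + 1)"
  have m0: "0 < m" "m \<le> 1" unfolding m_def by auto
  have "4 * D / \<epsilon> < sqrt (real K + 1)"
  proof -
    have "(4 * D / \<epsilon>)\<^sup>2 < real K + 1" unfolding K_def by linarith
    then have "sqrt ((4 * D / \<epsilon>)\<^sup>2) < sqrt (real K + 1)" by (rule real_sqrt_less_mono)
    then show ?thesis using D0 \<epsilon> by simp
  qed
  then have "4 * D < \<epsilon> * sqrt (real K + 1)" using \<epsilon> by (simp add: field_simps)
  then have Dm: "2 * (D * m) < \<epsilon> / 2" using \<epsilon> by (simp add: m_def field_simps)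
  define \<tau> where "\<tau> = C * \<bar>t\<bar> ^ 3 * m + \<sigma>\<^sup>2 * t ^ 4 * m\<^sup>2 / 8"
  have \<tau>D: "\<tau> \<le> D * m"
  proof -
    have "m\<^sup>2 \<le> m" using m0 by (simp add: power2_eq_square mult_le_cancel_left1)
    then have "\<sigma>\<^sup>2 * t ^ 4 * m\<^sup>2 / 8 \<le> \<sigma>\<^sup>2 * t ^ 4 * m / 8"
      by (intro divide_right_mono mult_left_mono) auto
    then show ?thesis unfolding \<tau>_def D_def by (simp add: algebra_simps)
  qed
  define B where "B = real K * L * \<bar>t\<bar> + \<sigma> * t\<^sup>2 * real K + 1"
  have B0: "B > 0" unfolding B_def using L sig by (simp add: add_nonneg_pos)
  obtain N where N: "\<And>p. p \<ge> N \<Longrightarrow> norm (Max ((\<lambda>j. \<bar>a p j - b p j\<bar>) ` {1..p}) - 0) < \<epsilon> / (2 * B)"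
    using LIMSEQ_D[OF close, of "\<epsilon> / (2 * B)"] \<epsilon> B0 by auto
  show "\<exists>N. \<forall>p\<ge>N. norm ((\<Prod>j\<in>{1..p}. \<psi> (a p j * t)) - (\<Prod>j\<in>{1..p}. \<psi> (b p j * t)) - 0) < \<epsilon>"
  proof (intro exI[of _ "max N (K + 1)"] allI impI)
    fix p assume p: "max N (K + 1) \<le> p"
    define \<delta> where "\<delta> = Max ((\<lambda>j. \<bar>a p j - b p j\<bar>) ` {1..p})"
    have \<delta>: "\<bar>a p j - b p j\<bar> \<le> \<delta>" if "j \<in> {1..p}" for j
      unfolding \<delta>_def using that by (intro Max_ge) auto
    have \<delta>0: "0 \<le> \<delta>" using \<delta>[of 1] p by (auto intro: order_trans)
    have \<delta>e: "\<delta> < \<epsilon> / (2 * B)" using N[of p] p \<delta>0 by (simp add: \<delta>_def)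
    have split: "{1..p} = {1..K} \<union> {K+1..p}" using p by auto
    have disj: "{1..K} \<inter> {K+1..p} = {}" by auto
    have prodsplit: "(\<Prod>j\<in>{1..p}. f j) = (\<Prod>j\<in>{1..K}. f j) * (\<Prod>j\<in>{K+1..p}. f j)" for f :: "nat \<Rightarrow> complex"
      unfolding split by (rule prod.union_disjoint) (use disj in auto)
    let ?Ha = "\<Prod>j\<in>{1..K}. \<psi> (a p j * t)" and ?Hb = "\<Prod>j\<in>{1..K}. \<psi> (b p j * t)"
    let ?Ta = "\<Prod>j\<in>{K+1..p}. \<psi> (a p j * t)" and ?Tb = "\<Prod>j\<in>{K+1..p}. \<psi> (b p j * t)"
    define Sa where "Sa = (\<Sum>j\<in>{K+1..p}. (a p j)\<^sup>2)"
    define Sb where "Sb = (\<Sum>j\<in>{K+1..p}. (b p j)\<^sup>2)"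
    have sumsplit: "(\<Sum>j\<in>{1..p}. f j) = (\<Sum>j\<in>{1..K}. f j) + (\<Sum>j\<in>{K+1..p}. f j)" for f :: "nat \<Rightarrow> real"
      unfolding split by (rule sum.union_disjoint) (use disj in auto)
    have na: "(\<Sum>j\<in>{1..p}. (a p j)\<^sup>2) = 1" using ca p unfolding coef_def by auto
    have nb: "(\<Sum>j\<in>{1..p}. (b p j)\<^sup>2) = 1" using cb p unfolding coef_def by auto
    have Sa0: "0 \<le> (\<Sum>j\<in>{1..K}. (a p j)\<^sup>2)" "0 \<le> Sa" unfolding Sa_def by (auto intro!: sum_nonneg)
    have Sa1: "Sa \<le> 1" "0 \<le> Sa" using na sumsplit[of "\<lambda>j. (a p j)\<^sup>2"] Sa0 unfolding Sa_def
      by linarith+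
    have Sb0: "0 \<le> (\<Sum>j\<in>{1..K}. (b p j)\<^sup>2)" "0 \<le> Sb" unfolding Sb_def by (auto intro!: sum_nonneg)
    have Sb1: "Sb \<le> 1" "0 \<le> Sb" using nb sumsplit[of "\<lambda>j. (b p j)\<^sup>2"] Sb0 unfolding Sb_def
      by linarith+
    have Ta: "norm (?Ta - complex_of_real (exp (- (\<sigma> * t\<^sup>2 * Sa) / 2))) \<le> \<tau> * Sa"
      unfolding Sa_def \<tau>_def
      by (rule tail_bound[OF psi1 psiapp sig C])
         (use coef_nonneg[OF ca] coef_small[OF ca] in \<open>auto simp: m_def\<close>)
    have Tb: "norm (?Tb - complex_of_real (exp (- (\<sigma> * t\<^sup>2 * Sb) / 2))) \<le> \<tau> * Sb"
      unfolding Sb_def \<tau>_def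
      by (rule tail_bound[OF psi1 psiapp sig C])
         (use coef_nonneg[OF cb] coef_small[OF cb] in \<open>auto simp: m_def\<close>)
    have \<tau>0: "0 \<le> \<tau>" unfolding \<tau>_def using C m0 by simp
    have Hab: "norm (?Ha - ?Hb) \<le> real K * L * \<bar>t\<bar> * \<delta>"
    proof -
      have "norm (?Ha - ?Hb) \<le> (\<Sum>j\<in>{1..K}. norm (\<psi> (a p j * t) - \<psi> (b p j * t)))"
        by (rule norm_prod_diff) (use psi1 in auto)
      also have "\<dots> \<le> (\<Sum>j\<in>{1..K}. L * \<bar>t\<bar> * \<delta>)"
      proof (rule sum_mono)
        fix j assume j: "j \<in> {1..K}"
        have "norm (\<psi> (a p j * t) - \<psi> (b p j * t)) \<le> L * \<bar>a p j * t - b p j * t\<bar>" by (rule psilip)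
        also have "\<bar>a p j * t - b p j * t\<bar> = \<bar>a p j - b p j\<bar> * \<bar>t\<bar>" by (metis abs_mult left_diff_distrib)
        also have "L * (\<bar>a p j - b p j\<bar> * \<bar>t\<bar>) \<le> L * (\<delta> * \<bar>t\<bar>)"
          using \<delta>[of j] j p L by (intro mult_left_mono mult_right_mono) auto
        finally show "norm (\<psi> (a p j * t) - \<psi> (b p j * t)) \<le> L * \<bar>t\<bar> * \<delta>" by (simp add: ac_simps)
      qed
      finally show ?thesis by simp
    qed
    have SaSb: "\<bar>Sa - Sb\<bar> \<le> 2 * real K * \<delta>"
    proof -
      have "Sa - Sb = (\<Sum>j\<in>{1..K}. (b p j)\<^sup>2 - (a p j)\<^sup>2)"
        using na nb sumsplit[of "\<lambda>j. (a p j)\<^sup>2"] sumsplit[of "\<lambda>j. (b p j)\<^sup>2"]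
        unfolding Sa_def Sb_def by (simp add: sum_subtractf)
      also have "\<bar>\<dots>\<bar> \<le> (\<Sum>j\<in>{1..K}. \<bar>(b p j)\<^sup>2 - (a p j)\<^sup>2\<bar>)" by (rule sum_abs)
      also have "\<dots> \<le> (\<Sum>j\<in>{1..K}. 2 * \<delta>)"
      proof (rule sum_mono)
        fix j assume j: "j \<in> {1..K}"
        then have jp: "j \<in> {1..p}" using p by auto
        have "\<bar>(b p j)\<^sup>2 - (a p j)\<^sup>2\<bar> = \<bar>a p j - b p j\<bar> * \<bar>a p j + b p j\<bar>"
          by (simp add: power2_eq_square abs_mult[symmetric] algebra_simps)
        also have "\<dots> \<le> \<delta> * 2"
          using \<delta>[OF jp] coef_nonneg[OF ca jp] coef_nonneg[OF cb jp] coef_le1[OF ca jp] coef_le1[OF cb jp] \<delta>0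
          by (intro mult_mono) auto
        finally show "\<bar>(b p j)\<^sup>2 - (a p j)\<^sup>2\<bar> \<le> 2 * \<delta>" by simp
      qed
      finally show ?thesis by simp
    qed
    have Eab: "norm (complex_of_real (exp (- (\<sigma> * t\<^sup>2 * Sa) / 2)) - complex_of_real (exp (- (\<sigma> * t\<^sup>2 * Sb) / 2)))
        \<le> \<sigma> * t\<^sup>2 * real K * \<delta>"
    proof -
      have "norm (complex_of_real (exp (- (\<sigma> * t\<^sup>2 * Sa) / 2)) - complex_of_real (exp (- (\<sigma> * t\<^sup>2 * Sb) / 2)))
          = \<bar>exp (- (\<sigma> * t\<^sup>2 * Sa / 2)) - exp (- (\<sigma> * t\<^sup>2 * Sb / 2))\<bar>"
        by (simp flip: of_real_diff)
      also have "\<dots> \<le> \<bar>\<sigma> * t\<^sup>2 * Sa / 2 - \<sigma> * t\<^sup>2 * Sb / 2\<bar>"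
        by (rule exp_neg_lip) (use sig Sa1 Sb1 in auto)
      also have "\<dots> = \<sigma> * t\<^sup>2 / 2 * \<bar>Sa - Sb\<bar>"
      proof -
        have "\<sigma> * t\<^sup>2 * Sa / 2 - \<sigma> * t\<^sup>2 * Sb / 2 = (\<sigma> * t\<^sup>2 / 2) * (Sa - Sb)" by (simp add: algebra_simps)
        then show ?thesis using sig by (simp only: abs_mult) simp
      qed
      also have "\<dots> \<le> \<sigma> * t\<^sup>2 / 2 * (2 * real K * \<delta>)"
        using sig by (intro mult_left_mono SaSb) auto
      finally show ?thesis by simp
    qed
    have Tab: "norm (?Ta - ?Tb) \<le> 2 * \<tau> + \<sigma> * t\<^sup>2 * real K * \<delta>"
    proof -
      have "norm (?Ta - ?Tb) \<le> norm (?Ta - complex_of_real (exp (- (\<sigma> * t\<^sup>2 * Sa) / 2)))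
          + norm (complex_of_real (exp (- (\<sigma> * t\<^sup>2 * Sa) / 2)) - complex_of_real (exp (- (\<sigma> * t\<^sup>2 * Sb) / 2)))
          + norm (?Tb - complex_of_real (exp (- (\<sigma> * t\<^sup>2 * Sb) / 2)))"
        by (rule tri3)
      also have "\<dots> \<le> \<tau> * 1 + \<sigma> * t\<^sup>2 * real K * \<delta> + \<tau> * 1"
      proof -
        have "\<tau> * Sa \<le> \<tau> * 1" by (rule mult_left_mono[OF Sa1(1) \<tau>0])
        moreover have "\<tau> * Sb \<le> \<tau> * 1" by (rule mult_left_mono[OF Sb1(1) \<tau>0])
        ultimately show ?thesis using Ta Tb Eab by linarith
      qed
      finally show ?thesis by simp
    qed
    have "norm ((\<Prod>j\<in>{1..p}. \<psi> (a p j * t)) - (\<Prod>j\<in>{1..p}. \<psi> (b p j * t)))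
        = norm (?Ha * ?Ta - ?Hb * ?Tb)" by (simp only: prodsplit)
    also have "\<dots> \<le> norm (?Ha - ?Hb) + norm (?Ta - ?Tb)"
      by (rule norm_mult_diff_le1) (use psi1 in \<open>auto simp: prod_norm[symmetric] intro!: prod_le_1\<close>)
    also have "\<dots> \<le> real K * L * \<bar>t\<bar> * \<delta> + (2 * \<tau> + \<sigma> * t\<^sup>2 * real K * \<delta>)"
      by (rule add_mono[OF Hab Tab])
    also have "\<dots> = (B - 1) * \<delta> + 2 * \<tau>" by (simp add: B_def algebra_simps)
    also have "\<dots> < \<epsilon>"
    proof -
      have "(B - 1) * \<delta> \<le> B * \<delta>" using \<delta>0 by (simp add: algebra_simps)
      also have "\<dots> \<le> B * (\<epsilon> / (2 * B))" using \<delta>e B0 by (intro mult_left_mono) auto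
      also have "\<dots> = \<epsilon> / 2" using B0 by simp
      finally show ?thesis using \<tau>D Dm by linarith
    qed
    finally show "norm ((\<Prod>j\<in>{1..p}. \<psi> (a p j * t)) - (\<Prod>j\<in>{1..p}. \<psi> (b p j * t)) - 0) < \<epsilon>" by simp
  qed
qed



lemma (in real_distribution) char_lip:
  assumes int: "integrable M (\<lambda>x. x)"
  shows "norm (char M s - char M s') \<le> \<bar>s - s'\<bar> * expectation (\<lambda>x. \<bar>x\<bar>)"
proof -
  have i1: "integrable M (\<lambda>x. iexp (u * x))" for u
    by (rule integrable_iexp) auto
  have "char M s - char M s' = (CLINT x|M. iexp (s * x) - iexp (s' * x))"
    unfolding char_def by (rule Bochner_Integration.integral_diff[symmetric, OF i1 i1])
  also have "norm \<dots> \<le> (\<integral>x. norm (iexp (s * x) - iexp (s' * x)) \<partial>M)"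
    by (rule integral_norm_bound)
  also have "\<dots> \<le> (\<integral>x. \<bar>s - s'\<bar> * \<bar>x\<bar> \<partial>M)"
  proof (rule integral_mono)
    show "integrable M (\<lambda>x. norm (iexp (s * x) - iexp (s' * x)))" using i1 by auto
    show "integrable M (\<lambda>x. \<bar>s - s'\<bar> * \<bar>x\<bar>)" using int by auto
    fix x
    have "iexp (s * x) - iexp (s' * x) = iexp (s' * x) * (iexp ((s - s') * x) - 1)"
      by (simp add: algebra_simps flip: exp_add)
    then have "norm (iexp (s * x) - iexp (s' * x)) = norm (iexp ((s - s') * x) - 1)"
      by (simp add: norm_mult del: of_real_mult)
    also have "\<dots> \<le> \<bar>(s - s') * x\<bar> / fact 1"
      using iexp_approx1[of "(s - s') * x" 0] by simp
    finally show "norm (iexp (s * x) - iexp (s' * x)) \<le> \<bar>s - s'\<bar> * \<bar>x\<bar>"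
      by (simp add: abs_mult)
  qed
  also have "\<dots> = \<bar>s - s'\<bar> * expectation (\<lambda>x. \<bar>x\<bar>)" by simp
  finally show ?thesis .
qed

lemma (in prob_space) char_X_approx:
  assumes rv[measurable]: "random_variable borel X"
    and i1: "integrable M X" and i2: "integrable M (\<lambda>x. (X x)\<^sup>2)" and i3: "integrable M (\<lambda>x. \<bar>X x\<bar> ^ 3)"
    and e0: "expectation X = 0"
  shows "norm (char (distr M borel X) s - complex_of_real (1 - s\<^sup>2 * expectation (\<lambda>x. (X x)\<^sup>2) / 2))
           \<le> expectation (\<lambda>x. \<bar>X x\<bar> ^ 3) / 6 * \<bar>s\<bar> ^ 3"
proof -
  have var: "variance X = expectation (\<lambda>x. (X x)\<^sup>2)" using e0 by simp
  have "cmod (char (distr M borel X) s - (1 - s^2 * expectation (\<lambda>x. (X x)\<^sup>2) / 2)) \<le>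
    (s^2 / 6) * expectation (\<lambda>x. min (6 * (X x)^2) (\<bar>s\<bar> * \<bar>X x\<bar>^3))"
    by (rule char_approx3'[OF rv i1 i2 e0 var refl])
  also have "expectation (\<lambda>x. min (6 * (X x)^2) (\<bar>s\<bar> * \<bar>X x\<bar>^3)) \<le> expectation (\<lambda>x. \<bar>s\<bar> * \<bar>X x\<bar>^3)"
    by (rule integral_mono') (use i3 in auto)
  also have "\<dots> = \<bar>s\<bar> * expectation (\<lambda>x. \<bar>X x\<bar>^3)" by simp
  finally have *: "cmod (char (distr M borel X) s - (1 - s^2 * expectation (\<lambda>x. (X x)\<^sup>2) / 2)) \<le>
     s\<^sup>2 / 6 * (\<bar>s\<bar> * expectation (\<lambda>x. \<bar>X x\<bar>^3))"
    by (simp add: mult_left_mono)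
  have h: "s\<^sup>2 * \<bar>s\<bar> = \<bar>s\<bar> ^ 3" by (cases "s \<ge> 0") (simp_all add: power2_eq_square power3_eq_cube)
  have "s\<^sup>2 / 6 * (\<bar>s\<bar> * expectation (\<lambda>x. \<bar>X x\<bar>^3)) = expectation (\<lambda>x. \<bar>X x\<bar> ^ 3) / 6 * (s\<^sup>2 * \<bar>s\<bar>)"
    by (simp only: mult_ac divide_inverse)
  then have "s\<^sup>2 / 6 * (\<bar>s\<bar> * expectation (\<lambda>x. \<bar>X x\<bar>^3)) = expectation (\<lambda>x. \<bar>X x\<bar> ^ 3) / 6 * \<bar>s\<bar> ^ 3"
    unfolding h .
  with * have "cmod (char (distr M borel X) s - (1 - s^2 * expectation (\<lambda>x. (X x)\<^sup>2) / 2)) \<le>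
     expectation (\<lambda>x. \<bar>X x\<bar> ^ 3) / 6 * \<bar>s\<bar> ^ 3" by (simp only:)
  then show ?thesis by simp
qed

lemma (in prob_space) char_scale:
  assumes rv[measurable]: "random_variable borel X"
  shows "char (distr M borel (\<lambda>\<omega>. c * X \<omega>)) t = char (distr M borel X) (c * t)"
  unfolding char_def by (simp add: integral_distr ac_simps)



lemma polya:
  fixes Fn :: "nat \<Rightarrow> real measure" and \<mu> :: "real measure"
  assumes dn: "\<And>n. real_distribution (Fn n)" and d: "real_distribution \<mu>"
    and wc: "weak_conv_m Fn \<mu>" and cont: "\<And>x. isCont (cdf \<mu>) x" and e: "\<epsilon> > 0"
  shows "eventually (\<lambda>n. \<forall>x. \<bar>cdf (Fn n) x - cdf \<mu> x\<bar> \<le> 2 * \<epsilon>) sequentially"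
proof -
  interpret \<mu>: real_distribution \<mu> by fact
  interpret Fn: real_distribution "Fn n" for n by (rule dn)
  define F where "F = cdf \<mu>"
  define G where "G n = cdf (Fn n)" for n
  have Gmono: "x \<le> y \<Longrightarrow> G n x \<le> G n y" for n x y
    unfolding G_def by (rule Fn.cdf_nondecreasing)
  have G01: "0 \<le> G n x" "G n x \<le> 1" for n x
    unfolding G_def using Fn.cdf_nonneg Fn.cdf_bounded_prob by auto
  have Fmono: "x \<le> y \<Longrightarrow> F x \<le> F y" for x y unfolding F_def by (rule \<mu>.cdf_nondecreasing)
  have F01: "0 \<le> F x" "F x \<le> 1" for x unfolding F_def using \<mu>.cdf_nonneg \<mu>.cdf_bounded_prob by auto
  have "eventually (\<lambda>x. F x < \<epsilon>) at_bot"
    using order_tendstoD(2)[OF \<mu>.cdf_lim_at_bot e] unfolding F_def .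
  then obtain a where a: "\<And>x. x \<le> a \<Longrightarrow> F x < \<epsilon>" by (auto simp: eventually_at_bot_linorder)
  have "eventually (\<lambda>x. F x > 1 - \<epsilon>) at_top"
    using order_tendstoD(1)[OF \<mu>.cdf_lim_at_top_prob, of "1 - \<epsilon>"] e unfolding F_def by simp
  then obtain b0 where b0: "\<And>x. x \<ge> b0 \<Longrightarrow> F x > 1 - \<epsilon>" by (auto simp: eventually_at_top_linorder)
  define b where "b = max b0 (a + 1)"
  have ab: "a < b" and b: "\<And>x. x \<ge> b \<Longrightarrow> F x > 1 - \<epsilon>" using b0 by (auto simp: b_def)
  have "continuous_on {a..b} F"
    using cont unfolding F_def by (intro continuous_at_imp_continuous_on) auto
  then have "uniformly_continuous_on {a..b} F" by (rule compact_uniformly_continuous) simp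
  then obtain \<delta> where \<delta>: "\<delta> > 0" and uc: "\<And>x x'. x \<in> {a..b} \<Longrightarrow> x' \<in> {a..b} \<Longrightarrow> dist x' x < \<delta> \<Longrightarrow> dist (F x') (F x) < \<epsilon>"
    unfolding uniformly_continuous_on_def using e by metis
  define m :: nat where "m = nat \<lceil>(b - a) / \<delta>\<rceil> + 1"
  have m1: "m \<ge> 1" unfolding m_def by simp
  have "(b - a) / \<delta> < real m" unfolding m_def by linarith
  then have bam: "(b - a) / real m < \<delta>" using m1 \<delta> by (simp add: field_simps)
  define h where "h = (b - a) / real m"
  have h0: "h > 0" unfolding h_def using ab m1 by simp
  have hd: "h < \<delta>" using bam by (simp add: h_def)
  have mh: "real m * h = b - a" unfolding h_def using m1 by simp
  define xs where "xs i = a + real i * h" for i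
  have xs_ab: "i \<le> m \<Longrightarrow> xs i \<in> {a..b}" for i
  proof -
    assume "i \<le> m"
    then have "real i * h \<le> real m * h" using h0 by (intro mult_right_mono) auto
    then show ?thesis using h0 mh by (auto simp: xs_def)
  qed
  have ev: "eventually (\<lambda>n. \<forall>i\<in>{..m}. \<bar>G n (xs i) - F (xs i)\<bar> < \<epsilon>) sequentially"
  proof (rule eventually_ball_finite, simp, intro ballI)
    fix i
    have "(\<lambda>n. G n (xs i)) \<longlonglongrightarrow> F (xs i)"
      using wc cont unfolding weak_conv_m_def weak_conv_def G_def F_def by blast
    then show "eventually (\<lambda>n. \<bar>G n (xs i) - F (xs i)\<bar> < \<epsilon>) sequentially"
      using e by (auto simp: tendsto_iff dist_real_def)
  qed
  show ?thesis
    unfolding F_def[symmetric] G_def[symmetric]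
  proof (rule eventually_mono[OF ev], intro allI)
    fix n x assume n: "\<forall>i\<in>{..m}. \<bar>G n (xs i) - F (xs i)\<bar> < \<epsilon>"
    have x0: "xs 0 = a" and xm: "xs m = b" using mh by (auto simp: xs_def)
    show "\<bar>G n x - F x\<bar> \<le> 2 * \<epsilon>"
    proof (cases "x < a")
      case True
      have "G n x \<le> G n a" using True by (intro Gmono) auto
      moreover have "G n a < F a + \<epsilon>" using n[rule_format, of 0] x0 by auto
      moreover have "F a < \<epsilon>" by (rule a) simp
      moreover have "F x < \<epsilon>" using True a by auto
      ultimately show ?thesis using G01[of n x] F01[of x] by linarith
    next
      case False
      show ?thesis
      proof (cases "x \<ge> b")
        case True
        have "G n b \<le> G n x" using True by (intro Gmono) auto
        moreover have "G n b > F b - \<epsilon>" using n[rule_format, of m] xm by auto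
        moreover have "F b > 1 - \<epsilon>" by (rule b) simp
        moreover have "F x > 1 - \<epsilon>" using True b by auto
        ultimately show ?thesis using G01[of n x] F01[of x] by linarith
      next
        case False2: False
        define k where "k = \<lfloor>(x - a) / h\<rfloor>"
        have k0: "k \<ge> 0" unfolding k_def using False h0 by simp
        define i where "i = nat k"
        have ik: "real i = real_of_int k" unfolding i_def using k0 by simp
        have "real_of_int k \<le> (x - a) / h" "(x - a) / h < real_of_int k + 1" unfolding k_def by linarith+
        then have lo: "real i * h \<le> x - a" and hi: "x - a < (real i + 1) * h"
          using h0 ik by (simp_all add: field_simps)
        have "real i * h < real m * h" using lo mh False2 by linarith
        then have im: "i < m" using h0 by simp
        have xi: "xs i \<le> x" using lo by (simp add: xs_def)
        have xi1: "x < xs (Suc i)" using hi by (simp add: xs_def algebra_simps)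
        have d1: "dist (xs (Suc i)) (xs i) < \<delta>" using hd h0 by (simp add: xs_def dist_real_def algebra_simps)
        have Fdiff: "\<bar>F (xs (Suc i)) - F (xs i)\<bar> < \<epsilon>"
          using uc[OF xs_ab xs_ab d1] im by (simp add: dist_real_def)
        have "G n x \<le> G n (xs (Suc i))" using xi1 by (intro Gmono) auto
        moreover have "G n (xs i) \<le> G n x" using xi by (intro Gmono)
        moreover have "\<bar>G n (xs i) - F (xs i)\<bar> < \<epsilon>" using n im by auto
        moreover have "\<bar>G n (xs (Suc i)) - F (xs (Suc i))\<bar> < \<epsilon>" using n im by auto
        moreover have "F (xs i) \<le> F x" "F x \<le> F (xs (Suc i))" using xi xi1 by (auto intro: Fmono)
        ultimately show ?thesis using Fdiff by linarith
      qed
    qed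
  qed
qed



lemma (in prob_space) small_ball_indep:
  fixes U W :: "'a \<Rightarrow> real"
  assumes ind: "indep_var borel U borel W"
    and bnd: "\<And>y. prob {\<omega> \<in> space M. U \<omega> \<in> {y<..y+w}} \<le> \<beta>"
  shows "prob {\<omega> \<in> space M. U \<omega> + W \<omega> \<in> {u<..u+w}} \<le> \<beta>"
proof -
  have rvU[measurable]: "random_variable borel U" using ind by (rule indep_var_rv1)
  have rvW[measurable]: "random_variable borel W" using ind by (rule indep_var_rv2)
  have eq: "distr M borel U \<Otimes>\<^sub>M distr M borel W = distr M (borel \<Otimes>\<^sub>M borel) (\<lambda>x. (U x, W x))"
    using ind by (simp add: indep_var_distribution_eq)
  interpret PU: prob_space "distr M borel U" by (rule prob_space_distr) simp
  interpret PW: prob_space "distr M borel W" by (rule prob_space_distr) simp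
  interpret P: pair_sigma_finite "distr M borel U" "distr M borel W" ..
  define A where "A = {z::real \<times> real. fst z + snd z \<in> {u<..u+w}}"
  have "(\<lambda>z::real\<times>real. fst z + snd z) \<in> borel_measurable (borel \<Otimes>\<^sub>M borel)" by measurable
  then have "(\<lambda>z::real\<times>real. fst z + snd z) -` {u<..u+w} \<inter> space (borel \<Otimes>\<^sub>M borel) \<in> sets (borel \<Otimes>\<^sub>M borel)"
    by (rule measurable_sets) simp
  moreover have "A = (\<lambda>z::real\<times>real. fst z + snd z) -` {u<..u+w} \<inter> space (borel \<Otimes>\<^sub>M borel)"
    by (auto simp: A_def space_pair_measure)
  ultimately have Am[measurable]: "A \<in> sets (borel \<Otimes>\<^sub>M borel)" by metis
  have "emeasure M {\<omega> \<in> space M. U \<omega> + W \<omega> \<in> {u<..u+w}} = emeasure (distr M (borel \<Otimes>\<^sub>M borel) (\<lambda>x. (U x, W x))) A"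
    by (subst emeasure_distr[OF _ Am]) (auto simp: A_def intro!: arg_cong[where f="emeasure M"])
  also have "\<dots> = emeasure (distr M borel U \<Otimes>\<^sub>M distr M borel W) A" by (simp add: eq)
  also have "\<dots> = (\<integral>\<^sup>+y. emeasure (distr M borel U) ((\<lambda>x. (x, y)) -` A) \<partial>distr M borel W)"
    by (rule P.emeasure_pair_measure_alt2) simp
  also have "\<dots> \<le> (\<integral>\<^sup>+y. ennreal \<beta> \<partial>distr M borel W)"
  proof (rule nn_integral_mono)
    fix y
    have "(\<lambda>x. (x, y)) -` A = {u - y<..u - y + w}" by (auto simp: A_def)
    then have "emeasure (distr M borel U) ((\<lambda>x. (x, y)) -` A) = emeasure M {\<omega> \<in> space M. U \<omega> \<in> {u - y<..u - y + w}}"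
      by (subst emeasure_distr) (auto intro!: arg_cong[where f="emeasure M"])
    also have "\<dots> = ennreal (prob {\<omega> \<in> space M. U \<omega> \<in> {u - y<..u - y + w}})"
      by (rule emeasure_eq_measure)
    also have "\<dots> \<le> ennreal \<beta>" using bnd by (rule ennreal_leI)
    finally show "emeasure (distr M borel U) ((\<lambda>x. (x, y)) -` A) \<le> ennreal \<beta>" .
  qed
  also have "\<dots> = ennreal \<beta>" using PW.emeasure_space_1 by simp
  finally have "ennreal (prob {\<omega> \<in> space M. U \<omega> + W \<omega> \<in> {u<..u+w}}) \<le> ennreal \<beta>"
    by (simp add: emeasure_eq_measure)
  moreover have "\<beta> \<ge> 0" using bnd[of 0] measure_nonneg order_trans by blast
  ultimately show ?thesis by (simp add: ennreal_le_iff)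
qed

lemma (in prob_space) chi2_interval:
  assumes Y: "distributed M lborel Y chi2_1_density" and e: "e > 0" and h: "h \<ge> 0"
  shows "prob {\<omega> \<in> space M. Y \<omega> \<in> {u<..u+h}} \<le> prob {\<omega> \<in> space M. Y \<omega> \<le> e} + h / sqrt (2 * pi * e)"
proof -
  have Y': "distributed M lborel Y (\<lambda>x. ennreal (chi2d x))" using Y by (simp add: chi2_density_eq)
  have rv[measurable]: "random_variable borel Y" using Y by (auto simp: distributed_def)
  define c where "c = 1 / sqrt (2 * pi * e)"
  have c0: "c \<ge> 0" unfolding c_def using e by simp
  have "emeasure M {\<omega> \<in> space M. Y \<omega> \<in> {u<..u+h}} = emeasure M (Y -` {u<..u+h} \<inter> space M)"
    by (auto intro!: arg_cong[where f="emeasure M"])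
  also have "\<dots> = (\<integral>\<^sup>+x. ennreal (chi2d x) * indicator {u<..u+h} x \<partial>lborel)"
    by (rule distributed_emeasure[OF Y']) simp
  also have "\<dots> \<le> (\<integral>\<^sup>+x. ennreal (chi2d x) * indicator {..e} x + ennreal c * indicator {u<..u+h} x \<partial>lborel)"
  proof (rule nn_integral_mono)
    fix x
    show "ennreal (chi2d x) * indicator {u<..u+h} x \<le> ennreal (chi2d x) * indicator {..e} x + ennreal c * indicator {u<..u+h} x"
    proof (cases "x \<le> e")
      case True then show ?thesis by (auto split: split_indicator)
    next
      case False
      then have xe: "x > e" by simp
      have "chi2d x \<le> c"
      proof -
        have "chi2d x = exp (- x / 2) / sqrt (2 * pi * x)" using xe e by (simp add: chi2d_def)
        also have "\<dots> \<le> 1 / sqrt (2 * pi * x)" using xe e by (intro divide_right_mono) auto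
        also have "\<dots> \<le> 1 / sqrt (2 * pi * e)" using xe e
          by (intro divide_left_mono real_sqrt_le_mono mult_left_mono) auto
        finally show ?thesis by (simp add: c_def)
      qed
      then show ?thesis using False by (auto split: split_indicator intro: ennreal_leI)
    qed
  qed
  also have "\<dots> = (\<integral>\<^sup>+x. ennreal (chi2d x) * indicator {..e} x \<partial>lborel) + (\<integral>\<^sup>+x. ennreal c * indicator {u<..u+h} x \<partial>lborel)"
    by (rule nn_integral_add) auto
  also have "(\<integral>\<^sup>+x. ennreal (chi2d x) * indicator {..e} x \<partial>lborel) = emeasure M (Y -` {..e} \<inter> space M)"
    by (rule distributed_emeasure[OF Y', symmetric]) simp
  also have "\<dots> = ennreal (prob {\<omega> \<in> space M. Y \<omega> \<le> e})"
    by (subst emeasure_eq_measure) (auto intro!: arg_cong[where f=prob])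
  also have "(\<integral>\<^sup>+x. ennreal c * indicator {u<..u+h} x \<partial>lborel) = ennreal c * ennreal h"
    using h by (simp add: nn_integral_cmult_indicator)
  also have "ennreal (prob {\<omega> \<in> space M. Y \<omega> \<le> e}) + ennreal c * ennreal h = ennreal (prob {\<omega> \<in> space M. Y \<omega> \<le> e} + c * h)"
    using c0 h by (simp add: ennreal_mult ennreal_plus)
  finally have "ennreal (prob {\<omega> \<in> space M. Y \<omega> \<in> {u<..u+h}}) \<le> ennreal (prob {\<omega> \<in> space M. Y \<omega> \<le> e} + c * h)"
    by (simp add: emeasure_eq_measure)
  then have "prob {\<omega> \<in> space M. Y \<omega> \<in> {u<..u+h}} \<le> prob {\<omega> \<in> space M. Y \<omega> \<le> e} + c * h"
    using c0 h by (subst (asm) ennreal_le_iff) (auto intro!: add_nonneg_nonneg)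
  then show ?thesis by (simp add: c_def)
qed

lemma (in prob_space) chi2_small:
  assumes Y: "distributed M lborel Y chi2_1_density" and \<epsilon>: "\<epsilon> > 0"
  shows "\<exists>e>0. prob {\<omega> \<in> space M. Y \<omega> \<le> e} < \<epsilon>"
proof -
  have Y': "distributed M lborel Y (\<lambda>x. ennreal (chi2d x))" using Y by (simp add: chi2_density_eq)
  have rv[measurable]: "random_variable borel Y" using Y by (auto simp: distributed_def)
  interpret D: real_distribution "distr M borel Y" by simp
  have cdfY: "cdf (distr M borel Y) x = prob {\<omega> \<in> space M. Y \<omega> \<le> x}" for x
    unfolding cdf_def by (subst measure_distr) (auto intro!: arg_cong[where f=prob])
  have "emeasure M (Y -` {..0} \<inter> space M) = (\<integral>\<^sup>+x. ennreal (chi2d x) * indicator {..0} x \<partial>lborel)"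
    by (rule distributed_emeasure[OF Y']) simp
  also have "\<dots> = 0" by (subst nn_integral_0_iff_AE) (auto simp: chi2d_def split: split_indicator)
  finally have "prob {\<omega> \<in> space M. Y \<omega> \<le> 0} = 0"
    by (subst (asm) emeasure_eq_measure) (auto simp: vimage_def Int_def conj_commute)
  then have c0: "cdf (distr M borel Y) 0 = 0" by (simp add: cdfY)
  have "(cdf (distr M borel Y) \<longlongrightarrow> 0) (at_right 0)"
    using D.cdf_is_right_cont[of 0] c0 by (simp add: continuous_within)
  then have "eventually (\<lambda>x. cdf (distr M borel Y) x < \<epsilon>) (at_right 0)"
    using \<epsilon> by (rule order_tendstoD)
  then obtain d where d: "d > 0" "\<And>x. 0 < x \<Longrightarrow> x < d \<Longrightarrow> cdf (distr M borel Y) x < \<epsilon>"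
    by (auto simp: eventually_at_right_field)
  show ?thesis using d(2)[of "d/2"] d(1) by (intro exI[of _ "d/2"]) (auto simp: cdfY)
qed



lemma gauss_facts:
  fixes \<sigma> :: real
  assumes \<sigma>: "\<sigma> > 0"
  defines "G \<equiv> distr std_normal_distribution borel (\<lambda>x. sqrt \<sigma> * x)"
  shows "real_distribution G"
    and "char G t = complex_of_real (exp (- (\<sigma> * t\<^sup>2) / 2))"
    and "isCont (cdf G) x"
proof -
  interpret S: real_distribution std_normal_distribution by (rule real_dist_normal_dist)
  show rd: "real_distribution G" unfolding G_def by (rule S.real_distribution_distr) simp
  have "char G t = char std_normal_distribution (sqrt \<sigma> * t)"
    unfolding G_def char_def by (simp add: integral_distr ac_simps)
  also have "\<dots> = complex_of_real (exp (- (\<sigma> * t\<^sup>2) / 2))"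
    using \<sigma> by (simp add: char_std_normal_distribution power_mult_distrib)
  finally show "char G t = complex_of_real (exp (- (\<sigma> * t\<^sup>2) / 2))" .
  interpret G: real_distribution G by (rule rd)
  have "emeasure std_normal_distribution {x / sqrt \<sigma>} = 0"
    by (subst emeasure_density) (auto intro!: nn_integral_zero' AE_mp[OF AE_lborel_singleton[of "x / sqrt \<sigma>"]] split: split_indicator)
  moreover have "measure G {x} = measure std_normal_distribution {x / sqrt \<sigma>}"
    unfolding G_def using \<sigma> by (subst measure_distr) (auto intro!: arg_cong[where f="measure _"] simp: field_simps)
  ultimately have "measure G {x} = 0" by (simp add: measure_def)
  then show "isCont (cdf G) x" by (simp add: G.isCont_cdf)
qed



lemma (in prob_space) sum_sq:
  fixes Y :: "nat \<Rightarrow> 'a \<Rightarrow> real"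
  assumes ind: "indep_vars (\<lambda>_. borel) Y I" and fin: "finite I"
    and sq: "\<And>i. i \<in> I \<Longrightarrow> integrable M (\<lambda>\<omega>. (Y i \<omega>)\<^sup>2)"
    and e0: "\<And>i. i \<in> I \<Longrightarrow> expectation (Y i) = 0"
  shows "integrable M (\<lambda>\<omega>. (\<Sum>i\<in>I. Y i \<omega>)\<^sup>2) \<and> integrable M (\<lambda>\<omega>. \<Sum>i\<in>I. Y i \<omega>)
     \<and> expectation (\<lambda>\<omega>. \<Sum>i\<in>I. Y i \<omega>) = 0
     \<and> expectation (\<lambda>\<omega>. (\<Sum>i\<in>I. Y i \<omega>)\<^sup>2) = (\<Sum>i\<in>I. expectation (\<lambda>\<omega>. (Y i \<omega>)\<^sup>2))"
  using fin ind sq e0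
proof (induction I rule: finite_induct)
  case empty then show ?case by simp
next
  case (insert i I)
  have rv[measurable]: "random_variable borel (Y j)" if "j \<in> insert i I" for j
    using insert.prems(1) that unfolding indep_vars_def by auto
  have IH: "integrable M (\<lambda>\<omega>. (\<Sum>i\<in>I. Y i \<omega>)\<^sup>2) \<and> integrable M (\<lambda>\<omega>. \<Sum>i\<in>I. Y i \<omega>)
     \<and> expectation (\<lambda>\<omega>. \<Sum>i\<in>I. Y i \<omega>) = 0
     \<and> expectation (\<lambda>\<omega>. (\<Sum>i\<in>I. Y i \<omega>)\<^sup>2) = (\<Sum>i\<in>I. expectation (\<lambda>\<omega>. (Y i \<omega>)\<^sup>2))"
    using insert.prems(2,3) by (intro insert.IH indep_vars_subset[OF insert.prems(1)]) auto
  have iv: "indep_var borel (Y i) borel (\<lambda>\<omega>. \<Sum>i\<in>I. Y i \<omega>)"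
    by (rule indep_vars_sum[OF insert.hyps(1,2) insert.prems(1)])
  have iY: "integrable M (Y i)"
    by (rule square_integrable_imp_integrable[OF rv[OF insertI1] insert.prems(2)[OF insertI1, unfolded power2_eq_square, folded power2_eq_square]])
  have iYW: "integrable M (\<lambda>\<omega>. Y i \<omega> * (\<Sum>i\<in>I. Y i \<omega>))"
    using iv iY IH by (intro indep_var_integrable) auto
  have eYW: "expectation (\<lambda>\<omega>. Y i \<omega> * (\<Sum>i\<in>I. Y i \<omega>)) = 0"
    using indep_var_lebesgue_integral[OF iv iY] IH insert.prems(3)[of i] by simp
  have sqY: "integrable M (\<lambda>\<omega>. (Y i \<omega>)\<^sup>2)" using insert.prems(2) by auto
  have eq: "(\<lambda>\<omega>. (\<Sum>j\<in>insert i I. Y j \<omega>)\<^sup>2) = (\<lambda>\<omega>. (Y i \<omega>)\<^sup>2 + 2 * (Y i \<omega> * (\<Sum>i\<in>I. Y i \<omega>)) + (\<Sum>i\<in>I. Y i \<omega>)\<^sup>2)"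
    using insert.hyps by (simp add: power2_eq_square algebra_simps)
  have eq2: "(\<lambda>\<omega>. \<Sum>j\<in>insert i I. Y j \<omega>) = (\<lambda>\<omega>. Y i \<omega> + (\<Sum>i\<in>I. Y i \<omega>))"
    using insert.hyps by simp
  show ?case
    unfolding eq eq2 using sqY iYW IH iY eYW insert.hyps insert.prems(3)[of i] by simp
qed

locale chi_setting =
  fixes M :: "'s measure" and \<eta> :: "nat \<Rightarrow> 's \<Rightarrow> real"
  assumes M: "prob_space M"
    and indep: "prob_space.indep_vars M (\<lambda>_. borel) \<eta> UNIV"
    and chi2: "\<And>j. distributed M lborel (\<eta> j) chi2_1_density"
begin

sublocale prob_space M by (rule M)

definition "X j \<omega> = \<eta> j \<omega> - 1"
definition "P0 = distr M borel (X 0)"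
definition "\<psi> = char P0"
definition "\<sigma> = expectation (\<lambda>\<omega>. (X 0 \<omega>)\<^sup>2)"
definition "C = expectation (\<lambda>\<omega>. \<bar>X 0 \<omega>\<bar> ^ 3) / 6"
definition "L = expectation (\<lambda>\<omega>. \<bar>X 0 \<omega>\<bar>)"
definition "V c p \<omega> = (\<Sum>j=1..p. c p j * X j \<omega>)"
definition "\<mu> c p = distr M borel (V c p)"

lemma rv_eta[measurable]: "random_variable borel (\<eta> j)"
  using chi2_facts(1)[OF chi2] .

lemma rv_X[measurable]: "random_variable borel (X j)"
  unfolding X_def by measurable

lemma rv_V[measurable]: "random_variable borel (V c p)"
  unfolding V_def by measurable

lemma X_facts:
  shows "integrable M (X j)" "integrable M (\<lambda>\<omega>. (X j \<omega>)\<^sup>2)" "integrable M (\<lambda>\<omega>. \<bar>X j \<omega>\<bar> ^ 3)"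
    "integrable M (\<lambda>\<omega>. \<bar>X j \<omega>\<bar>)" "expectation (X j) = 0" "expectation (\<lambda>\<omega>. (X j \<omega>)\<^sup>2) = 2"
proof -
  note f = chi2_facts[OF chi2[of j]]
  have i1: "integrable M (\<eta> j)" using f(3)[of 1] by simp
  have i2: "integrable M (\<lambda>\<omega>. (\<eta> j \<omega>)\<^sup>2)" using f(3)[of 2] by simp
  show iX: "integrable M (X j)" unfolding X_def using i1 by simp
  have eq2: "(\<lambda>\<omega>. (X j \<omega>)\<^sup>2) = (\<lambda>\<omega>. (\<eta> j \<omega>)\<^sup>2 - 2 * \<eta> j \<omega> + 1)"
    by (simp add: X_def power2_eq_square algebra_simps)
  show "integrable M (\<lambda>\<omega>. (X j \<omega>)\<^sup>2)" unfolding eq2 using i1 i2 by simp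
  show "integrable M (\<lambda>\<omega>. \<bar>X j \<omega>\<bar>)" using iX by simp
  show "integrable M (\<lambda>\<omega>. \<bar>X j \<omega>\<bar> ^ 3)"
  proof (rule Bochner_Integration.integrable_bound[OF Bochner_Integration.integrable_add[OF integrable_mult_right[OF f(2)[of 3]] integrable_const]])
    show "AE \<omega> in M. norm (\<bar>X j \<omega>\<bar> ^ 3) \<le> norm (8 * \<bar>\<eta> j \<omega>\<bar> ^ 3 + 8)"
    proof (rule AE_I2)
      fix \<omega>
      define y where "y = \<bar>\<eta> j \<omega>\<bar>"
      have y0: "y \<ge> 0" unfolding y_def by simp
      have "\<bar>X j \<omega>\<bar> \<le> y + 1" unfolding X_def y_def by simp
      then have "\<bar>X j \<omega>\<bar> ^ 3 \<le> (y + 1) ^ 3" by (rule power_mono) simp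
      also have "(y + 1) ^ 3 \<le> 8 * y ^ 3 + 8"
      proof (cases "y \<le> 1")
        case True
        then have "(y + 1) ^ 3 \<le> 2 ^ 3" using y0 by (intro power_mono) auto
        then have "(y + 1) ^ 3 \<le> 8" by simp
        moreover have "0 \<le> y ^ 3" using y0 by simp
        ultimately show ?thesis by linarith
      next
        case False
        then have "(y + 1) ^ 3 \<le> (2 * y) ^ 3" using y0 by (intro power_mono) auto
        then show ?thesis using y0 by (simp add: power_mult_distrib)
      qed
      finally show "norm (\<bar>X j \<omega>\<bar> ^ 3) \<le> norm (8 * \<bar>\<eta> j \<omega>\<bar> ^ 3 + 8)" by (simp add: y_def)
    qed
  qed simp
  show "expectation (X j) = 0" unfolding X_def using i1 f(4) by (simp add: prob_space)
  show "expectation (\<lambda>\<omega>. (X j \<omega>)\<^sup>2) = 2" unfolding eq2 using i1 i2 f(4,5)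
    by (simp add: prob_space)
qed

lemma distr_X: "distr M borel (X j) = P0"
proof -
  have *: "distr M borel (X j) = distr (density lborel chi2_1_density) borel (\<lambda>x. x - 1)" for j
  proof -
    have "distr M borel (X j) = distr (distr M lborel (\<eta> j)) borel (\<lambda>x. x - 1)"
      unfolding X_def by (subst distr_distr) (auto simp: comp_def)
    also have "\<dots> = distr (density lborel chi2_1_density) borel (\<lambda>x. x - 1)"
      using chi2[of j] by (simp add: distributed_def)
    finally show ?thesis .
  qed
  show ?thesis unfolding P0_def by (simp add: *)
qed

lemma sigma_eq: "\<sigma> = 2" unfolding \<sigma>_def using X_facts by simp

lemma C_nonneg: "C \<ge> 0" unfolding C_def by simp
lemma L_nonneg: "L \<ge> 0" unfolding L_def by simp

lemma psi1: "norm (\<psi> s) \<le> 1"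
  unfolding \<psi>_def P0_def by (rule real_distribution.cmod_char_le_1) simp

lemma psiapp: "norm (\<psi> s - complex_of_real (1 - s\<^sup>2 * \<sigma> / 2)) \<le> C * \<bar>s\<bar> ^ 3"
  unfolding \<psi>_def P0_def \<sigma>_def C_def
  by (rule char_X_approx) (use X_facts in auto)

lemma psilip: "norm (\<psi> s - \<psi> s') \<le> L * \<bar>s - s'\<bar>"
proof -
  interpret P: real_distribution P0 unfolding P0_def by simp
  have "integrable P0 (\<lambda>x. x)" unfolding P0_def using X_facts(1)[of 0]
    by (subst integrable_distr_eq) auto
  then have "norm (\<psi> s - \<psi> s') \<le> \<bar>s - s'\<bar> * P.expectation (\<lambda>x. \<bar>x\<bar>)"
    unfolding \<psi>_def by (rule P.char_lip)
  also have "P.expectation (\<lambda>x. \<bar>x\<bar>) = L" unfolding P0_def L_def by (subst integral_distr) auto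
  finally show ?thesis by (simp add: mult.commute)
qed

lemma char_mu: "char (\<mu> c p) t = (\<Prod>j\<in>{1..p}. \<psi> (c p j * t))"
proof -
  have ind: "indep_vars (\<lambda>_. borel) (\<lambda>j \<omega>. c p j * X j \<omega>) {1..p}"
  proof -
    have "indep_vars (\<lambda>_. borel) (\<lambda>j \<omega>. c p j * (\<eta> j \<omega> - 1)) UNIV"
      by (rule indep_vars_compose2[OF indep, where Y="\<lambda>j x. c p j * (x - 1)"]) simp
    then show ?thesis unfolding X_def by (rule indep_vars_subset) simp
  qed
  have "char (\<mu> c p) t = (\<Prod>j\<in>{1..p}. char (distr M borel (\<lambda>\<omega>. c p j * X j \<omega>)) t)"
    unfolding \<mu>_def V_def by (rule char_distr_sum[OF ind])
  also have "\<dots> = (\<Prod>j\<in>{1..p}. \<psi> (c p j * t))"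
    by (simp add: char_scale distr_X \<psi>_def)
  finally show ?thesis .
qed

lemma real_distribution_mu: "real_distribution (\<mu> c p)"
  unfolding \<mu>_def by simp

lemma cdf_mu: "cdf (\<mu> c p) x = prob {\<omega> \<in> space M. (\<Sum>j=1..p. c p j * (\<eta> j \<omega> - 1)) \<le> x}"
  unfolding cdf_def \<mu>_def by (subst measure_distr) (auto simp: V_def X_def intro!: arg_cong[where f=prob])

end



lemma subseq_crit:
  fixes D :: "nat \<Rightarrow> real"
  assumes "\<And>s :: nat \<Rightarrow> nat. strict_mono s \<Longrightarrow> \<exists>r :: nat \<Rightarrow> nat. strict_mono r \<and> (\<lambda>n. D (s (r n))) \<longlonglongrightarrow> 0"
  shows "D \<longlonglongrightarrow> 0"
proof (rule ccontr)
  assume "\<not> D \<longlonglongrightarrow> 0"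
  then obtain \<epsilon> where "\<epsilon> > 0" and "infinite {n. \<not> dist (D n) 0 < \<epsilon>}"
    by (auto simp: tendsto_iff not_eventually INFM_iff_infinite cofinite_eq_sequentially[symmetric])
  then obtain s :: "nat \<Rightarrow> nat" where s: "\<And>n. \<not> dist (D (s n)) 0 < \<epsilon>" and "strict_mono s"
    using enumerate_in_set enumerate_mono by (fastforce simp: strict_mono_def)
  obtain r where "strict_mono r" "(\<lambda>n. D (s (r n))) \<longlonglongrightarrow> 0" using assms[of s] \<open>strict_mono s\<close> by blast
  then have "eventually (\<lambda>n. dist (D (s (r n))) 0 < \<epsilon>) sequentially"
    using \<open>\<epsilon> > 0\<close> by (auto simp: tendsto_iff)
  then obtain n where "dist (D (s (r n))) 0 < \<epsilon>" by (meson eventually_sequentially order_refl)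
  with s show False by blast
qed

lemma weak_conv_m_subseq:
  assumes "weak_conv_m F \<nu>" "strict_mono r"
  shows "weak_conv_m (\<lambda>n. F (r n)) \<nu>"
  using assms LIMSEQ_subseq_LIMSEQ[of _ _ r]
  unfolding weak_conv_m_def weak_conv_def by (auto simp: comp_def)

lemma kolmogorov_conv:
  fixes F G :: "nat \<Rightarrow> real measure"
  assumes dF: "\<And>n. real_distribution (F n)" and dG: "\<And>n. real_distribution (G n)"
    and d: "real_distribution \<nu>" and wF: "weak_conv_m F \<nu>" and wG: "weak_conv_m G \<nu>"
    and cont: "\<And>x. isCont (cdf \<nu>) x"
  shows "(\<lambda>n. SUP x. \<bar>cdf (F n) x - cdf (G n) x\<bar>) \<longlonglongrightarrow> 0"
proof (rule LIMSEQ_I)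
  fix \<epsilon> :: real assume e: "\<epsilon> > 0"
  have e4: "\<epsilon> / 8 > 0" using e by simp
  have "eventually (\<lambda>n. \<forall>x. \<bar>cdf (F n) x - cdf \<nu> x\<bar> \<le> 2 * (\<epsilon> / 8)) sequentially"
    by (rule polya[OF dF d wF cont e4])
  moreover have "eventually (\<lambda>n. \<forall>x. \<bar>cdf (G n) x - cdf \<nu> x\<bar> \<le> 2 * (\<epsilon> / 8)) sequentially"
    by (rule polya[OF dG d wG cont e4])
  ultimately have "eventually (\<lambda>n. norm ((SUP x. \<bar>cdf (F n) x - cdf (G n) x\<bar>) - 0) < \<epsilon>) sequentially"
  proof eventually_elim
    case (elim n)
    have b: "\<bar>cdf (F n) x - cdf (G n) x\<bar> \<le> \<epsilon> / 2" for x
      using elim(1)[rule_format, of x] elim(2)[rule_format, of x] by linarith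
    have bdd: "bdd_above (range (\<lambda>x. \<bar>cdf (F n) x - cdf (G n) x\<bar>))"
      by (rule bdd_aboveI2[where M="\<epsilon> / 2"]) (use b in auto)
    have "(SUP x. \<bar>cdf (F n) x - cdf (G n) x\<bar>) \<le> \<epsilon> / 2"
      by (rule cSUP_least) (use b in auto)
    moreover have "0 \<le> (SUP x. \<bar>cdf (F n) x - cdf (G n) x\<bar>)"
      by (rule order_trans[OF _ cSUP_upper[OF _ bdd, of 0]]) auto
    ultimately show ?case using e by simp
  qed
  then show "\<exists>N. \<forall>n\<ge>N. norm ((SUP x. \<bar>cdf (F n) x - cdf (G n) x\<bar>) - 0) < \<epsilon>"
    by (simp add: eventually_sequentially)
qed

lemma exists_not_in_countable:
  fixes a b :: real
  assumes "countable A" "a < b"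
  shows "\<exists>y. a < y \<and> y < b \<and> y \<notin> A"
proof (rule ccontr)
  assume "\<not> ?thesis"
  then have "{a<..<b} \<subseteq> A" by auto
  then have "countable {a<..<b}" using assms(1) countable_subset by blast
  then show False using uncountable_open_interval[of a b] assms(2) by simp
qed

context chi_setting
begin

lemma second_moment:
  shows "integrable M (\<lambda>\<omega>. (V c p \<omega>)\<^sup>2)" "expectation (V c p) = 0"
    "expectation (\<lambda>\<omega>. (V c p \<omega>)\<^sup>2) = \<sigma> * (\<Sum>j=1..p. (c p j)\<^sup>2)"
proof -
  have ind: "indep_vars (\<lambda>_. borel) (\<lambda>j \<omega>. c p j * X j \<omega>) {1..p}"
  proof -
    have "indep_vars (\<lambda>_. borel) (\<lambda>j \<omega>. c p j * (\<eta> j \<omega> - 1)) UNIV"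
      by (rule indep_vars_compose2[OF indep, where Y="\<lambda>j x. c p j * (x - 1)"]) simp
    then show ?thesis unfolding X_def by (rule indep_vars_subset) simp
  qed
  have sq: "integrable M (\<lambda>\<omega>. (c p j * X j \<omega>)\<^sup>2)" for j
    using integrable_mult_right[OF X_facts(2)[of j], of "(c p j)\<^sup>2"] by (simp add: power_mult_distrib)
  have e0: "expectation (\<lambda>\<omega>. c p j * X j \<omega>) = 0" for j
    using X_facts(5)[of j] by simp
  note r = sum_sq[OF ind finite_atLeastAtMost sq e0]
  have Vfun: "V c p = (\<lambda>\<omega>. \<Sum>j=1..p. c p j * X j \<omega>)" by (simp add: V_def fun_eq_iff)
  show "integrable M (\<lambda>\<omega>. (V c p \<omega>)\<^sup>2)"
    unfolding Vfun by (rule r[THEN conjunct1])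
  show "expectation (V c p) = 0"
    unfolding Vfun by (rule r[THEN conjunct2, THEN conjunct2, THEN conjunct1])
  have ej: "expectation (\<lambda>\<omega>. (c p j * X j \<omega>)\<^sup>2) = \<sigma> * (c p j)\<^sup>2" for j
    using X_facts(6)[of j] sigma_eq by (simp add: power_mult_distrib)
  have "expectation (\<lambda>\<omega>. (V c p \<omega>)\<^sup>2) = (\<Sum>j=1..p. expectation (\<lambda>\<omega>. (c p j * X j \<omega>)\<^sup>2))"
    unfolding Vfun by (rule r[THEN conjunct2, THEN conjunct2, THEN conjunct2])
  also have "\<dots> = (\<Sum>j=1..p. \<sigma> * (c p j)\<^sup>2)" unfolding ej ..
  finally show "expectation (\<lambda>\<omega>. (V c p \<omega>)\<^sup>2) = \<sigma> * (\<Sum>j=1..p. (c p j)\<^sup>2)"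
    using sum_distrib_left[of \<sigma> "\<lambda>j. (c p j)\<^sup>2" "{1..p}"] by simp
qed

lemma tight_mu:
  assumes c: "coef c"
  shows "tight (\<mu> c)"
  unfolding tight_def
proof (intro conjI allI impI)
  show "real_distribution (\<mu> c n)" for n by (rule real_distribution_mu)
next
  fix \<epsilon> :: real assume e: "\<epsilon> > 0"
  define k where "k = sqrt (\<sigma> / \<epsilon>) + 1"
  have k0: "k > 0" unfolding k_def using sigma_eq e by (simp add: add_nonneg_pos)
  have "sqrt (\<sigma> / \<epsilon>) < k" unfolding k_def by simp
  then have "(sqrt (\<sigma> / \<epsilon>))\<^sup>2 < k\<^sup>2" using sigma_eq e by (intro power_strict_mono) auto
  then have "\<sigma> / \<epsilon> < k\<^sup>2" using sigma_eq e by simp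
  then have sk: "\<sigma> / k\<^sup>2 < \<epsilon>" using k0 e by (simp add: field_simps)
  show "\<exists>a b. a < b \<and> (\<forall>n. 1 - \<epsilon> < measure (\<mu> c n) {a<..b})"
  proof (rule exI[of _ "-k"], rule exI[of _ k], intro conjI allI)
    show "- k < k" using k0 by simp
    fix p
    have sum1: "(\<Sum>j=1..p. (c p j)\<^sup>2) \<le> 1"
    proof (cases "p \<ge> 1")
      case True
      then show ?thesis using c unfolding coef_def by simp
    next
      case False
      then show ?thesis by simp
    qed
    have sm: "integrable M (\<lambda>\<omega>. (V c p \<omega>)\<^sup>2)" "expectation (V c p) = 0"
      "expectation (\<lambda>\<omega>. (V c p \<omega>)\<^sup>2) = \<sigma> * (\<Sum>j=1..p. (c p j)\<^sup>2)"
      by (rule second_moment)+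
    have "prob {\<omega> \<in> space M. \<bar>V c p \<omega> - expectation (V c p)\<bar> \<ge> k} \<le> variance (V c p) / k\<^sup>2"
      by (rule Chebyshev_inequality[OF rv_V sm(1) k0])
    also have "variance (V c p) = \<sigma> * (\<Sum>j=1..p. (c p j)\<^sup>2)"
      using sm by simp
    also have "\<dots> / k\<^sup>2 \<le> \<sigma> / k\<^sup>2"
      using sum1 sigma_eq k0 by (intro divide_right_mono) auto
    finally have ch0: "prob {\<omega> \<in> space M. \<bar>V c p \<omega> - expectation (V c p)\<bar> \<ge> k} \<le> \<sigma> / k\<^sup>2" .
    have ch: "prob {\<omega> \<in> space M. \<bar>V c p \<omega>\<bar> \<ge> k} < \<epsilon>"
      using ch0 sk unfolding sm(2) by simp
    have eq: "prob {\<omega> \<in> space M. \<not> (\<bar>V c p \<omega>\<bar> \<ge> k)} = 1 - prob {\<omega> \<in> space M. \<bar>V c p \<omega>\<bar> \<ge> k}"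
      by (rule prob_neg) measurable
    have "measure (\<mu> c p) {-k<..k} = prob (V c p -` {-k<..k} \<inter> space M)"
      unfolding \<mu>_def by (rule measure_distr) auto
    also have "prob {\<omega> \<in> space M. \<not> (\<bar>V c p \<omega>\<bar> \<ge> k)} \<le> prob (V c p -` {-k<..k} \<inter> space M)"
      by (rule finite_measure_mono) auto
    ultimately show "1 - \<epsilon> < measure (\<mu> c p) {-k<..k}" using ch eq by linarith
  qed
qed

lemma small_ball_V:
  assumes c: "coef c" and p: "p \<ge> 1" and c1: "c p 1 > 0" and e: "e > 0" and w: "w \<ge> 0"
  shows "prob {\<omega> \<in> space M. V c p \<omega> \<in> {y<..y+w}}
           \<le> prob {\<omega> \<in> space M. \<eta> 1 \<omega> \<le> e} + (w / c p 1) / sqrt (2 * pi * e)"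
proof -
  define Y where "Y j \<omega> = c p j * X j \<omega>" for j \<omega>
  have ind: "indep_vars (\<lambda>_. borel) Y (insert 1 {2..p})"
  proof -
    have "indep_vars (\<lambda>_. borel) (\<lambda>j \<omega>. c p j * (\<eta> j \<omega> - 1)) UNIV"
      by (rule indep_vars_compose2[OF indep, where Y="\<lambda>j x. c p j * (x - 1)"]) simp
    then show ?thesis unfolding X_def Y_def by (rule indep_vars_subset) simp
  qed
  have iv: "indep_var borel (Y 1) borel (\<lambda>\<omega>. \<Sum>i\<in>{2..p}. Y i \<omega>)"
    by (rule indep_vars_sum[OF _ _ ind]) auto
  have split: "{1..p} = insert 1 {2..p}" using p by auto
  have Veq: "V c p \<omega> = Y 1 \<omega> + (\<Sum>i\<in>{2..p}. Y i \<omega>)" for \<omega>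
    unfolding V_def Y_def split by simp
  define \<beta> where "\<beta> = prob {\<omega> \<in> space M. \<eta> 1 \<omega> \<le> e} + (w / c p 1) / sqrt (2 * pi * e)"
  have "prob {\<omega> \<in> space M. Y 1 \<omega> + (\<Sum>i\<in>{2..p}. Y i \<omega>) \<in> {y<..y+w}} \<le> \<beta>"
  proof (rule small_ball_indep[OF iv])
    fix z
    have "{\<omega> \<in> space M. Y 1 \<omega> \<in> {z<..z+w}} = {\<omega> \<in> space M. \<eta> 1 \<omega> \<in> {z / c p 1 + 1<..z / c p 1 + 1 + w / c p 1}}"
      using c1 by (auto simp: Y_def X_def field_simps)
    also have "prob \<dots> \<le> \<beta>" unfolding \<beta>_def
      by (rule chi2_interval[OF chi2 e]) (use w c1 in simp)
    finally show "prob {\<omega> \<in> space M. Y 1 \<omega> \<in> {z<..z+w}} \<le> \<beta>" .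
  qed
  then show ?thesis unfolding Veq \<beta>_def .
qed

end



context chi_setting
begin

definition "Gs = distr std_normal_distribution borel (\<lambda>x. sqrt \<sigma> * x)"

lemma sigma_pos: "\<sigma> > 0" using sigma_eq by simp

lemma Gs_facts: "real_distribution Gs" "char Gs t = complex_of_real (exp (- (\<sigma> * t\<^sup>2) / 2))" "isCont (cdf Gs) x"
  unfolding Gs_def using gauss_facts[OF sigma_pos] by auto

lemma gauss_limit:
  assumes c: "coef c" and lim: "(\<lambda>n. c (q n) 1) \<longlonglongrightarrow> 0" and q1: "eventually (\<lambda>n. q n \<ge> 1) sequentially"
  shows "weak_conv_m (\<lambda>n. \<mu> c (q n)) Gs"
proof (rule levy_continuity[OF real_distribution_mu Gs_facts(1)])
  fix t
  define g where "g n = C * \<bar>t\<bar> ^ 3 * c (q n) 1 + \<sigma>\<^sup>2 * t ^ 4 * (c (q n) 1)\<^sup>2 / 8" for n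
  have g0: "g \<longlonglongrightarrow> C * \<bar>t\<bar> ^ 3 * 0 + \<sigma>\<^sup>2 * t ^ 4 * 0\<^sup>2 / 8"
    unfolding g_def by (intro tendsto_intros lim) simp
  have "eventually (\<lambda>n. norm (char (\<mu> c (q n)) t - char Gs t) \<le> g n) sequentially"
  proof (rule eventually_mono[OF q1])
    fix n assume n: "q n \<ge> 1"
    have s1: "(\<Sum>j\<in>{1..q n}. (c (q n) j)\<^sup>2) = 1" using c n unfolding coef_def by simp
    have "norm ((\<Prod>j\<in>{1..q n}. \<psi> (c (q n) j * t)) - complex_of_real (exp (- (\<sigma> * t\<^sup>2 * (\<Sum>j\<in>{1..q n}. (c (q n) j)\<^sup>2)) / 2)))
       \<le> (C * \<bar>t\<bar> ^ 3 * c (q n) 1 + \<sigma>\<^sup>2 * t ^ 4 * (c (q n) 1)\<^sup>2 / 8) * (\<Sum>j\<in>{1..q n}. (c (q n) j)\<^sup>2)"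
    proof (rule tail_bound[OF psi1 psiapp _ C_nonneg])
      show "0 \<le> \<sigma>" using sigma_pos by simp
      fix j assume j: "j \<in> {1..q n}"
      show "0 \<le> c (q n) j \<and> c (q n) j \<le> c (q n) 1"
        using coef_nonneg[OF c j] coef_mono[OF c, of 1 j "q n"] j by auto
    qed
    then show "norm (char (\<mu> c (q n)) t - char Gs t) \<le> g n"
      unfolding s1 char_mu Gs_facts(2) g_def by simp
  qed
  then have "(\<lambda>n. char (\<mu> c (q n)) t - char Gs t) \<longlonglongrightarrow> 0"
    by (rule Lim_null_comparison) (use g0 in simp)
  then show "(\<lambda>n. char (\<mu> c (q n)) t) \<longlonglongrightarrow> char Gs t"
    by (rule LIM_zero_cancel)
qed

lemma atomless_limit:
  assumes c: "coef c" and lim: "(\<lambda>n. c (q n) 1) \<longlonglongrightarrow> \<alpha>" and \<alpha>: "\<alpha> > 0"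
    and q1: "eventually (\<lambda>n. q n \<ge> 1) sequentially"
    and wc: "weak_conv_m (\<lambda>n. \<mu> c (q n)) \<nu>" and rd: "real_distribution \<nu>"
  shows "isCont (cdf \<nu>) x"
proof -
  interpret N: real_distribution \<nu> by (rule rd)
  have "measure \<nu> {x} \<le> \<epsilon>" if \<epsilon>: "\<epsilon> > 0" for \<epsilon>
  proof -
    obtain e where e: "e > 0" "prob {\<omega> \<in> space M. \<eta> 1 \<omega> \<le> e} < \<epsilon> / 2"
      using chi2_small[OF chi2[of 1], of "\<epsilon> / 2"] \<epsilon> by auto
    define w where "w = \<epsilon> * \<alpha> * sqrt (2 * pi * e) / 16"
    have w0: "w > 0" unfolding w_def using \<epsilon> \<alpha> e by simp
    obtain y1 where y1: "x - w < y1" "y1 < x" "y1 \<notin> {y. measure \<nu> {y} > 0}"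
      using exists_not_in_countable[OF N.countable_atoms, of "x - w" x] w0 by auto
    obtain y2 where y2: "x < y2" "y2 < x + w" "y2 \<notin> {y. measure \<nu> {y} > 0}"
      using exists_not_in_countable[OF N.countable_atoms, of x "x + w"] w0 by auto
    have cont1: "isCont (cdf \<nu>) y1" using y1(3) N.isCont_cdf[of y1] measure_nonneg[of \<nu> "{y1}"] by auto
    have cont2: "isCont (cdf \<nu>) y2" using y2(3) N.isCont_cdf[of y2] measure_nonneg[of \<nu> "{y2}"] by auto
    have l1: "(\<lambda>n. cdf (\<mu> c (q n)) y1) \<longlonglongrightarrow> cdf \<nu> y1"
      using wc cont1 unfolding weak_conv_m_def weak_conv_def by blast
    have l2: "(\<lambda>n. cdf (\<mu> c (q n)) y2) \<longlonglongrightarrow> cdf \<nu> y2"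
      using wc cont2 unfolding weak_conv_m_def weak_conv_def by blast
    have big: "eventually (\<lambda>n. c (q n) 1 > \<alpha> / 2) sequentially"
      using order_tendstoD(1)[OF lim, of "\<alpha> / 2"] \<alpha> by simp
    define B where "B = prob {\<omega> \<in> space M. \<eta> 1 \<omega> \<le> e} + (4 * w / \<alpha>) / sqrt (2 * pi * e)"
    have B: "B < \<epsilon>"
    proof -
      have "(4 * w / \<alpha>) / sqrt (2 * pi * e) = \<epsilon> / 4"
        unfolding w_def using \<alpha> e by (simp add: field_simps)
      then show ?thesis unfolding B_def using e(2) \<epsilon> by linarith
    qed
    have ev: "eventually (\<lambda>n. cdf (\<mu> c (q n)) y2 - cdf (\<mu> c (q n)) y1 \<le> B) sequentially"
      using big q1
    proof eventually_elim
      case (elim n)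
      interpret Mn: real_distribution "\<mu> c (q n)" by (rule real_distribution_mu)
      have c1: "c (q n) 1 > 0" using elim \<alpha> by linarith
      have y12: "y1 < y2" using y1 y2 by simp
      have "cdf (\<mu> c (q n)) y2 - cdf (\<mu> c (q n)) y1 = measure (\<mu> c (q n)) {y1<..y2}"
        by (rule Mn.cdf_diff_eq[OF y12])
      also have "\<dots> = prob (V c (q n) -` {y1<..y2} \<inter> space M)"
        unfolding \<mu>_def by (rule measure_distr) auto
      also have "\<dots> \<le> prob {\<omega> \<in> space M. V c (q n) \<omega> \<in> {y1<..y1 + 2 * w}}"
        using y1 y2 by (intro finite_measure_mono) auto
      also have "\<dots> \<le> prob {\<omega> \<in> space M. \<eta> 1 \<omega> \<le> e} + (2 * w / c (q n) 1) / sqrt (2 * pi * e)"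
        by (rule small_ball_V[OF c elim(2) c1 e(1)]) (use w0 in simp)
      also have "(2 * w / c (q n) 1) \<le> 4 * w / \<alpha>"
        using elim(1) \<alpha> w0 c1 by (simp add: field_simps)
      then have "(2 * w / c (q n) 1) / sqrt (2 * pi * e) \<le> (4 * w / \<alpha>) / sqrt (2 * pi * e)"
        using e by (intro divide_right_mono) auto
      finally show ?case unfolding B_def by simp
    qed
    have "cdf \<nu> y2 - cdf \<nu> y1 \<le> B"
      by (rule tendsto_upperbound[OF tendsto_diff[OF l2 l1] ev]) simp
    moreover have "measure \<nu> {x} \<le> measure \<nu> {y1<..y2}"
      using y1 y2 by (intro N.finite_measure_mono) auto
    moreover have "measure \<nu> {y1<..y2} = cdf \<nu> y2 - cdf \<nu> y1"
      using y1 y2 by (simp add: N.cdf_diff_eq)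
    ultimately show ?thesis using B by linarith
  qed
  then have "measure \<nu> {x} \<le> 0" by (rule field_le_epsilon) simp
  then have "measure \<nu> {x} = 0" using measure_nonneg[of \<nu> "{x}"] by linarith
  then show ?thesis by (simp add: N.isCont_cdf)
qed

end



context chi_setting
begin

lemma subseq_ge1:
  assumes "strict_mono (q :: nat \<Rightarrow> nat)"
  shows "eventually (\<lambda>n. q n \<ge> 1) sequentially"
  using seq_suble[OF assms] by (intro eventually_sequentiallyI[of 1]) (metis le_trans)

lemma lim_comp:
  assumes "(\<lambda>n. Z n) \<longlonglongrightarrow> l" "strict_mono r"
  shows "(\<lambda>n. Z (r n)) \<longlonglongrightarrow> l"
  using LIMSEQ_subseq_LIMSEQ[OF assms] by (simp add: comp_def)

theorem main_conv:
  assumes ca: "coef a" and cb: "coef b"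
    and close: "(\<lambda>p. Max ((\<lambda>j. \<bar>a p j - b p j\<bar>) ` {1..p})) \<longlonglongrightarrow> 0"
  shows "(\<lambda>p. SUP x. \<bar>cdf (\<mu> a p) x - cdf (\<mu> b p) x\<bar>) \<longlonglongrightarrow> 0"
proof (rule subseq_crit)
  fix s :: "nat \<Rightarrow> nat" assume s: "strict_mono s"
  define f where "f n = max 0 (min 1 (a (s n) 1))" for n
  have "bounded (range f)" unfolding bounded_iff by (intro exI[of _ 1]) (auto simp: f_def)
  then obtain \<alpha> r1 where r1: "strict_mono r1" and fr1: "(f \<circ> r1) \<longlonglongrightarrow> \<alpha>"
    using bounded_imp_convergent_subsequence by blast
  have sr1: "strict_mono (\<lambda>n. s (r1 n))" by (rule strict_mono_compose[OF s r1])
  have ev1: "eventually (\<lambda>n. s (r1 n) \<ge> 1) sequentially" by (rule subseq_ge1[OF sr1])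
  have fa: "eventually (\<lambda>n. f (r1 n) = a (s (r1 n)) 1) sequentially"
    using ev1 by eventually_elim (use coef_nonneg[OF ca] coef_le1[OF ca] in \<open>auto simp: f_def\<close>)
  have la: "(\<lambda>n. a (s (r1 n)) 1) \<longlonglongrightarrow> \<alpha>"
    using Lim_transform_eventually[OF fr1[unfolded comp_def] fa] .
  have \<alpha>0: "\<alpha> \<ge> 0"
    by (rule tendsto_lowerbound[OF fr1]) (auto simp: f_def)
  define \<delta> where "\<delta> p = Max ((\<lambda>j. \<bar>a p j - b p j\<bar>) ` {1..p})" for p
  have \<delta>1: "\<bar>a p 1 - b p 1\<bar> \<le> \<delta> p" if "p \<ge> 1" for p
    unfolding \<delta>_def using that by (intro Max_ge) auto
  have d0: "(\<lambda>n. \<delta> (s (r1 n))) \<longlonglongrightarrow> 0"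
    using lim_comp[OF close sr1] unfolding \<delta>_def .
  have "(\<lambda>n. a (s (r1 n)) 1 - b (s (r1 n)) 1) \<longlonglongrightarrow> 0"
  proof (rule Lim_null_comparison[OF _ d0])
    show "eventually (\<lambda>n. norm (a (s (r1 n)) 1 - b (s (r1 n)) 1) \<le> \<delta> (s (r1 n))) sequentially"
      using ev1 by eventually_elim (use \<delta>1 in auto)
  qed
  from tendsto_diff[OF la this] have lb: "(\<lambda>n. b (s (r1 n)) 1) \<longlonglongrightarrow> \<alpha>" by simp
  have wrap: "\<exists>r. strict_mono r \<and> (\<lambda>n. (SUP x. \<bar>cdf (\<mu> a (s (r n))) x - cdf (\<mu> b (s (r n))) x\<bar>)) \<longlonglongrightarrow> 0"
  proof (cases "\<alpha> = 0")
    case True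
    have wa: "weak_conv_m (\<lambda>n. \<mu> a (s (r1 n))) Gs" by (rule gauss_limit[OF ca la[unfolded True] ev1])
    have wb: "weak_conv_m (\<lambda>n. \<mu> b (s (r1 n))) Gs" by (rule gauss_limit[OF cb lb[unfolded True] ev1])
    show ?thesis
      by (intro exI[of _ r1] conjI r1 kolmogorov_conv[OF real_distribution_mu real_distribution_mu Gs_facts(1) wa wb Gs_facts(3)])
  next
    case False
    then have \<alpha>p: "\<alpha> > 0" using \<alpha>0 by simp
    obtain r2 \<nu>a where r2: "strict_mono r2" and rda: "real_distribution \<nu>a"
      and wa0: "weak_conv_m (\<mu> a \<circ> (\<lambda>n. s (r1 n)) \<circ> r2) \<nu>a"
      using tight_imp_convergent_subsubsequence[OF tight_mu[OF ca] sr1] by blast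
    have sr12: "strict_mono (\<lambda>n. s (r1 (r2 n)))" by (rule strict_mono_compose[OF sr1 r2])
    obtain r3 \<nu>b where r3: "strict_mono r3" and rdb: "real_distribution \<nu>b"
      and wb0: "weak_conv_m (\<mu> b \<circ> (\<lambda>n. s (r1 (r2 n))) \<circ> r3) \<nu>b"
      using tight_imp_convergent_subsubsequence[OF tight_mu[OF cb] sr12] by blast
    define q where "q n = s (r1 (r2 (r3 n)))" for n
    have q: "strict_mono q" unfolding q_def by (rule strict_mono_compose[OF sr12 r3])
    have wa: "weak_conv_m (\<lambda>n. \<mu> a (q n)) \<nu>a"
      using weak_conv_m_subseq[OF wa0 r3] by (simp add: q_def comp_def)
    have wb: "weak_conv_m (\<lambda>n. \<mu> b (q n)) \<nu>b"
      using wb0 by (simp add: q_def comp_def)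
    have r23: "strict_mono (\<lambda>n. r2 (r3 n))" by (rule strict_mono_compose[OF r2 r3])
    have laq: "(\<lambda>n. a (q n) 1) \<longlonglongrightarrow> \<alpha>"
      using lim_comp[OF la r23] by (simp add: q_def)
    have q1: "eventually (\<lambda>n. q n \<ge> 1) sequentially" by (rule subseq_ge1[OF q])
    have chareq: "char \<nu>a = char \<nu>b"
    proof
      fix t
      have ca1: "(\<lambda>n. char (\<mu> a (q n)) t) \<longlonglongrightarrow> char \<nu>a t"
        by (rule levy_continuity1[OF real_distribution_mu rda wa])
      have cb1: "(\<lambda>n. char (\<mu> b (q n)) t) \<longlonglongrightarrow> char \<nu>b t"
        by (rule levy_continuity1[OF real_distribution_mu rdb wb])
      have "(\<lambda>p. (\<Prod>j\<in>{1..p}. \<psi> (a p j * t)) - (\<Prod>j\<in>{1..p}. \<psi> (b p j * t))) \<longlonglongrightarrow> 0"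
        by (rule char_close[OF psi1 psiapp psilip _ C_nonneg L_nonneg ca cb close]) (use sigma_pos in simp)
      then have "(\<lambda>n. char (\<mu> a (q n)) t - char (\<mu> b (q n)) t) \<longlonglongrightarrow> 0"
        unfolding char_mu by (rule lim_comp[OF _ q])
      moreover have "(\<lambda>n. char (\<mu> a (q n)) t - char (\<mu> b (q n)) t) \<longlonglongrightarrow> char \<nu>a t - char \<nu>b t"
        by (rule tendsto_diff[OF ca1 cb1])
      ultimately have "char \<nu>a t - char \<nu>b t = 0" by (rule LIMSEQ_unique[rotated])
      then show "char \<nu>a t = char \<nu>b t" by simp
    qed
    have eqab: "\<nu>b = \<nu>a" by (rule Levy_uniqueness[OF rdb rda chareq[symmetric]])
    have cont: "isCont (cdf \<nu>a) x" for x
      by (rule atomless_limit[OF ca laq \<alpha>p q1 wa rda])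
    have "(\<lambda>n. SUP x. \<bar>cdf (\<mu> a (q n)) x - cdf (\<mu> b (q n)) x\<bar>) \<longlonglongrightarrow> 0"
      by (rule kolmogorov_conv[OF real_distribution_mu real_distribution_mu rda wa wb[unfolded eqab] cont])
    then show ?thesis
      by (intro exI[of _ "\<lambda>n. r1 (r2 (r3 n))"] conjI strict_mono_compose[OF r1 r23]) (simp add: q_def)
  qed
  then show "\<exists>r. strict_mono r \<and> (\<lambda>n. (SUP x. \<bar>cdf (\<mu> a (s (r n))) x - cdf (\<mu> b (s (r n))) x\<bar>)) \<longlonglongrightarrow> 0" .
qed

end


theorem mainTheorem4:
  fixes M :: "'s measure"
    and a b :: "nat \<Rightarrow> nat \<Rightarrow> real"
    and \<eta> :: "nat \<Rightarrow> 's \<Rightarrow> real"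
  assumes M: "prob_space M"
    and indep: "prob_space.indep_vars M (\<lambda>_. borel) \<eta> UNIV"
    and chi2: "\<And>j. distributed M lborel (\<eta> j) chi2_1_density"
    and a_mono: "\<And>p j. 1 \<le> j \<Longrightarrow> j < p \<Longrightarrow> a p (Suc j) \<le> a p j"
    and a_nonneg: "\<And>p. p \<ge> 1 \<Longrightarrow> a p p \<ge> 0"
    and b_mono: "\<And>p j. 1 \<le> j \<Longrightarrow> j < p \<Longrightarrow> b p (Suc j) \<le> b p j"
    and b_nonneg: "\<And>p. p \<ge> 1 \<Longrightarrow> b p p \<ge> 0"
    and a_norm: "\<And>p. p \<ge> 1 \<Longrightarrow> (\<Sum>j=1..p. (a p j)\<^sup>2) = 1"
    and b_norm: "\<And>p. p \<ge> 1 \<Longrightarrow> (\<Sum>j=1..p. (b p j)\<^sup>2) = 1"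
    and close: "(\<lambda>p. Max ((\<lambda>j. \<bar>a p j - b p j\<bar>) ` {1..p})) \<longlonglongrightarrow> 0"
  shows "(\<lambda>p. SUP x::real. \<bar>measure M {\<omega> \<in> space M. (\<Sum>j=1..p. a p j * (\<eta> j \<omega> - 1)) \<le> x}
                          - measure M {\<omega> \<in> space M. (\<Sum>j=1..p. b p j * (\<eta> j \<omega> - 1)) \<le> x}\<bar>)
         \<longlonglongrightarrow> 0"
proof -
  interpret chi_setting M \<eta> by (rule chi_setting.intro[OF M indep chi2])
  have ca: "coef a" unfolding coef_def using a_mono a_nonneg a_norm by blast
  have cb: "coef b" unfolding coef_def using b_mono b_nonneg b_norm by blast
  show ?thesis using main_conv[OF ca cb close] unfolding cdf_mu .
qed

end
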